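(* Let $D_1,D_2$ be $\mathbb N_0$-valued and $D_1^*,D_2^*$ be $\mathbb N$-valued random variables, $\ell\in\mathbb N$ and $K$ an exploration rule. Then one can couple the $\ell$-step $K$-explorations of a $\mathrm{GWP}(D_1,D_1^* )$-tree and a $\mathrm{GWP}(D_2,D_2^* )$-tree such that they agree with probability at least $$1-d_{\mathrm{TV}}(\mathbb P_{D_1},\mathbb P_{D_2})-\ell\,d_{\mathrm{TV}}(\mathbb P_{D_1^*},\mathbb P_{D_2^*}).$$
   Context: A $\mathrm{GWP}(D,D^* )$-tree is a random rooted tree where the root has a $D$-distributed number of children and every other vertex independently has a $(D^*-1)$-distributed number of children; it is regarded as a rooted multigraph whose weights are determined by the multigraph structure. Generalised graphs allow edges with one endpoint equal to a cemetery $\partial$; for finite $V_0$, the $V_0$-disclosed subgraph has vertex set $V_0$ and all edges with an endpoint in $V_0$, other endpoints replaced by $\partial$. An exploration is a finite rooted generalised graph with a finite sequence of its edges; an exploration rule $K$ is an isomorphism-invariant probability kernel from explorations to edges (possibly "no edge"). The $K$-exploration of a rooted graph starts from the $\{\text{root}\}$-disclosed subgraph and at step $k$ draws $e_k\sim K(\mathfrak E_{k-1},\cdot)$, adds the endpoints of $e_k$ to the disclosed set and records $e_k$. Two explorations agree if an isomorphism of rooted generalised multigraphs maps one to the other including edge sequences. $\mathbb P_D$ denotes the law of $D$. *)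

theory Defs
  imports "HOL-Probability.Probability"
begin

definition dTV :: "nat pmf \<Rightarrow> nat pmf \<Rightarrow> real" where
  "dTV p q = (SUP A. \<bar>measure_pmf.prob p A - measure_pmf.prob q A\<bar>)"

text \<open>Edges carry an identity of type 'e; the endpoints of an edge form a set of at most two
  elements of type 'v option, where None is the cemetery vertex.\<close>

record ('v, 'e) ggraph =
  gverts :: "'v set"
  gedges :: "'e set"
  gends  :: "'e \<Rightarrow> 'v option set"
  groot  :: 'v

type_synonym ('v, 'e) exploration = "('v, 'e) ggraph \<times> 'e list"

definition finite_expl :: "('v, 'e) exploration \<Rightarrow> bool" where
  "finite_expl X \<longleftrightarrow> finite (gverts (fst X)) \<and> finite (gedges (fst X))
      \<and> groot (fst X) \<in> gverts (fst X) \<and> set (snd X) \<subseteq> gedges (fst X)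
      \<and> (\<forall>e \<in> gedges (fst X). gends (fst X) e \<noteq> {}
            \<and> card (gends (fst X) e) \<le> 2 \<and> gends (fst X) e - {None} \<subseteq> Some ` gverts (fst X))"

definition expl_iso ::
  "('v \<Rightarrow> 'w) \<Rightarrow> ('e \<Rightarrow> 'f) \<Rightarrow> ('v, 'e) exploration \<Rightarrow> ('w, 'f) exploration \<Rightarrow> bool" where
  "expl_iso f g X Y \<longleftrightarrow>
      bij_betw f (gverts (fst X)) (gverts (fst Y))
    \<and> bij_betw g (gedges (fst X)) (gedges (fst Y))
    \<and> f (groot (fst X)) = groot (fst Y)
    \<and> (\<forall>e \<in> gedges (fst X). gends (fst Y) (g e) = map_option f ` gends (fst X) e)
    \<and> map g (snd X) = snd Y"

definition expl_agree :: "('v, 'e) exploration \<Rightarrow> ('v, 'e) exploration \<Rightarrow> bool" where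
  "expl_agree X Y \<longleftrightarrow> (\<exists>f g. expl_iso f g X Y)"

text \<open>Explorations are
  represented with vertices and edges labelled by nat lists (every finite exploration
  is isomorphic to such a one).\<close>

type_synonym expl = "(nat list, nat list) exploration"

definition exploration_rule :: "(expl \<Rightarrow> nat list option pmf) \<Rightarrow> bool" where
  "exploration_rule K \<longleftrightarrow>
     (\<forall>X. finite_expl X \<longrightarrow> set_pmf (K X) \<subseteq> insert None (Some ` gedges (fst X)))
   \<and> (\<forall>X Y f g. finite_expl X \<longrightarrow> finite_expl Y \<longrightarrow> expl_iso f g X Y \<longrightarrow>
          K Y = map_pmf (map_option g) (K X))"

text \<open>The edge between butlast w and w is identified with the (non-root) vertex w.\<close>

inductive_set tree_verts :: "(nat list \<Rightarrow> nat) \<Rightarrow> nat list set" for c where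
  root: "[] \<in> tree_verts c"
| child: "v \<in> tree_verts c \<Longrightarrow> i < c v \<Longrightarrow> v @ [i] \<in> tree_verts c"

definition disclosed :: "(nat list \<Rightarrow> nat) \<Rightarrow> nat list set \<Rightarrow> (nat list, nat list) ggraph" where
  "disclosed c V0 = \<lparr> gverts = V0,
      gedges = {w \<in> tree_verts c. w \<noteq> [] \<and> (w \<in> V0 \<or> butlast w \<in> V0)},
      gends = (\<lambda>w. {if butlast w \<in> V0 then Some (butlast w) else None,
                     if w \<in> V0 then Some w else None}),
      groot = [] \<rparr>"

text \<open>One step of the K-exploration: state = (disclosed vertex set, edge sequence, stopped).
  Drawing "no edge" stops the exploration.\<close>

definition expl_step ::
  "(expl \<Rightarrow> nat list option pmf) \<Rightarrow> (nat list \<Rightarrow> nat) \<Rightarrow>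
     nat list set \<times> nat list list \<times> bool \<Rightarrow> (nat list set \<times> nat list list \<times> bool) pmf" where
  "expl_step K c s = (case s of (V, es, stop) \<Rightarrow>
     if stop then return_pmf (V, es, True)
     else map_pmf (\<lambda>e. case e of None \<Rightarrow> (V, es, True)
                             | Some w \<Rightarrow> (V \<union> {butlast w, w}, es @ [w], False))
                  (K (disclosed c V, es)))"

fun expl_state ::
  "(expl \<Rightarrow> nat list option pmf) \<Rightarrow> (nat list \<Rightarrow> nat) \<Rightarrow> nat \<Rightarrow>
     (nat list set \<times> nat list list \<times> bool) pmf" where
  "expl_state K c 0 = return_pmf ({[]}, [], False)"
| "expl_state K c (Suc n) = bind_pmf (expl_state K c n) (expl_step K c)"

definition exploration :: "(expl \<Rightarrow> nat list option pmf) \<Rightarrow> (nat list \<Rightarrow> nat) \<Rightarrow> nat \<Rightarrow> expl pmf" where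
  "exploration K c n = map_pmf (\<lambda>(V, es, _). (disclosed c V, es)) (expl_state K c n)"

definition GWP :: "nat pmf \<Rightarrow> nat pmf \<Rightarrow> (nat list \<Rightarrow> nat) measure" where
  "GWP D Ds = (\<Pi>\<^sub>M v\<in>UNIV. if v = [] then measure_pmf D else measure_pmf (map_pmf (\<lambda>k. k - 1) Ds))"

definition expl_law :: "(expl \<Rightarrow> nat list option pmf) \<Rightarrow> nat pmf \<Rightarrow> nat pmf \<Rightarrow> nat \<Rightarrow> expl measure" where
  "expl_law K D Ds n = Giry_Monad.bind (GWP D Ds) (\<lambda>c. measure_pmf (exploration K c n))"

end

theory Submission
  imports Defs
begin

lemma tree_snoc: "v @ [i] \<in> tree_verts c \<longleftrightarrow> v \<in> tree_verts c \<and> i < c v"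
proof
  assume "v @ [i] \<in> tree_verts c"
  then show "v \<in> tree_verts c \<and> i < c v"
    by (cases rule: tree_verts.cases) auto
next
  assume "v \<in> tree_verts c \<and> i < c v"
  then show "v @ [i] \<in> tree_verts c" by (auto intro: tree_verts.child)
qed

lemma tree_agree:
  assumes cl: "\<forall>u\<in>V. butlast u \<in> V" and eq: "\<forall>u\<in>V. c1 u = c2 u"
  shows "u \<in> V \<Longrightarrow> u \<in> tree_verts c1 \<longleftrightarrow> u \<in> tree_verts c2"
proof (induction u rule: rev_induct)
  case Nil
  then show ?case by (auto intro: tree_verts.root)
next
  case (snoc x xs)
  then have "xs \<in> V" using cl by (metis butlast_snoc)
  then show ?case using snoc eq by (simp add: tree_snoc)
qed

lemma disc_eq:
  assumes cl: "\<forall>u\<in>V. butlast u \<in> V" and eq: "\<forall>u\<in>V. c1 u = c2 u"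
  shows "disclosed c1 V = disclosed c2 V"
proof -
  have "w \<in> tree_verts c1 \<longleftrightarrow> w \<in> tree_verts c2" if "w \<noteq> []" "w \<in> V \<or> butlast w \<in> V" for w
  proof -
    have b: "butlast w \<in> V" using that cl by auto
    have w: "w = butlast w @ [last w]" using that by simp
    have "w \<in> tree_verts c1 \<longleftrightarrow> butlast w \<in> tree_verts c1 \<and> last w < c1 (butlast w)"
      by (subst w, subst tree_snoc) simp
    also have "\<dots> \<longleftrightarrow> butlast w \<in> tree_verts c2 \<and> last w < c2 (butlast w)"
      using tree_agree[OF cl eq b] eq b by simp
    also have "\<dots> \<longleftrightarrow> w \<in> tree_verts c2"
      by (subst (2) w, subst tree_snoc) simp
    finally show ?thesis .
  qed
  then show ?thesis unfolding disclosed_def by auto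
qed

lemma finite_tree_depth: "finite {u \<in> tree_verts c. length u \<le> n}"
proof (induction n)
  case 0
  have "{u \<in> tree_verts c. length u \<le> 0} \<subseteq> {[]}" by auto
  then show ?case using finite_subset by blast
next
  case (Suc n)
  have "{u \<in> tree_verts c. length u \<le> Suc n} \<subseteq>
        insert [] ((\<lambda>(u,i). u @ [i]) ` (SIGMA u:{u \<in> tree_verts c. length u \<le> n}. {..<c u}))"
  proof
    fix u assume u: "u \<in> {u \<in> tree_verts c. length u \<le> Suc n}"
    show "u \<in> insert [] ((\<lambda>(u,i). u @ [i]) ` (SIGMA u:{u \<in> tree_verts c. length u \<le> n}. {..<c u}))"
    proof (cases "u = []")
      case False
      then have w: "u = butlast u @ [last u]" by simp
      with u have "butlast u \<in> tree_verts c \<and> last u < c (butlast u)"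
        by (metis (no_types, lifting) mem_Collect_eq tree_snoc)
      moreover have "length (butlast u) \<le> n" using u by auto
      ultimately show ?thesis using w
        by (intro insertI2) (rule image_eqI[of _ _ "(butlast u, last u)"], auto)
    qed simp
  qed
  moreover have "finite (SIGMA u:{u \<in> tree_verts c. length u \<le> n}. {..<c u})"
    using Suc by auto
  ultimately show ?case using finite_subset by blast
qed

lemma finite_gedges:
  assumes "finite V"
  shows "finite (gedges (disclosed c V))"
proof -
  have "gedges (disclosed c V) \<subseteq> V \<union> (\<lambda>(u,i). u @ [i]) ` (SIGMA u:V. {..<c u})"
  proof
    fix w assume w: "w \<in> gedges (disclosed c V)"
    show "w \<in> V \<union> (\<lambda>(u,i). u @ [i]) ` (SIGMA u:V. {..<c u})"
    proof (cases "w \<in> V")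
      case False
      with w have ne: "w \<noteq> []" and b: "butlast w \<in> V" and t: "w \<in> tree_verts c"
        by (auto simp: disclosed_def)
      have e: "w = butlast w @ [last w]" using ne by simp
      with t have "last w < c (butlast w)" by (metis tree_snoc)
      then show ?thesis using b e
        by (intro UnI2) (rule image_eqI[of _ _ "(butlast w, last w)"], auto)
    qed simp
  qed
  moreover have "finite (SIGMA u:V. {..<c u})" using assms by auto
  ultimately show ?thesis using assms finite_subset by blast
qed

definition Inv :: "(nat list \<Rightarrow> nat) \<Rightarrow> nat \<Rightarrow> nat list set \<times> nat list list \<times> bool \<Rightarrow> bool" where
  "Inv c k s \<longleftrightarrow> finite (fst s) \<and> [] \<in> fst s \<and> (\<forall>u\<in>fst s. butlast u \<in> fst s)
     \<and> fst s \<subseteq> tree_verts c \<and> (\<forall>u\<in>fst s. length u \<le> k)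
     \<and> set (fst (snd s)) \<subseteq> gedges (disclosed c (fst s))"

lemma gedges_mono: "V \<subseteq> W \<Longrightarrow> gedges (disclosed c V) \<subseteq> gedges (disclosed c W)"
  by (auto simp: disclosed_def)

lemma Inv_finite_expl:
  assumes "Inv c k (V, es, b)"
  shows "finite_expl (disclosed c V, es)"
  using assms finite_gedges[of V c]
  unfolding Inv_def finite_expl_def
  by (auto simp: disclosed_def card_insert_if)

lemma step_support:
  assumes K: "exploration_rule K" and I: "Inv c k s"
  assumes s': "s' \<in> set_pmf (expl_step K c s)"
  shows "Inv c (Suc k) s' \<and> fst s \<subseteq> fst s' \<and> (\<exists>w. fst s' \<subseteq> insert w (fst s))"
proof -
  obtain V es b where s: "s = (V, es, b)" by (cases s) auto
  show ?thesis
  proof (cases b)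
    case True
    then show ?thesis using s s' I by (auto simp: expl_step_def Inv_def)
  next
    case False
    have fe: "finite_expl (disclosed c V, es)" using I s Inv_finite_expl by blast
    have supp: "set_pmf (K (disclosed c V, es)) \<subseteq> insert None (Some ` gedges (disclosed c V))"
      using K fe unfolding exploration_rule_def by auto
    have "s' \<in> (\<lambda>e. case e of None \<Rightarrow> (V, es, True)
                             | Some w \<Rightarrow> (insert (butlast w) (insert w V), es @ [w], False)) ` set_pmf (K (disclosed c V, es))"
      using s' False s by (simp add: expl_step_def)
    then obtain e where e: "e \<in> set_pmf (K (disclosed c V, es))"
      and s'e: "s' = (case e of None \<Rightarrow> (V, es, True)
                             | Some w \<Rightarrow> (insert (butlast w) (insert w V), es @ [w], False))"
      by blast
    show ?thesis
    proof (cases e)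
      case None
      then show ?thesis using s'e I s by (auto simp: Inv_def)
    next
      case (Some w)
      with e supp have w: "w \<in> gedges (disclosed c V)" by auto
      then have ne: "w \<noteq> []" and t: "w \<in> tree_verts c" and wb: "w \<in> V \<or> butlast w \<in> V"
        by (auto simp: disclosed_def)
      have b: "butlast w \<in> V" using wb I s by (auto simp: Inv_def)
      have V': "insert (butlast w) (insert w V) = insert w V" using b by auto
      have len: "length w \<le> Suc k"
        using b I s ne by (auto simp: Inv_def)
      have gm: "gedges (disclosed c V) \<subseteq> gedges (disclosed c (insert w V))"
        by (rule gedges_mono) auto
      have "Inv c (Suc k) (insert w V, es @ [w], False)"
        using I s b t len w gm
        by (auto simp: Inv_def)
      then show ?thesis using s'e Some s V' by auto
    qed
  qed
qed

lemma Inv_mono: "Inv c k s \<Longrightarrow> k \<le> k' \<Longrightarrow> Inv c k' s"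
  by (auto simp: Inv_def)

lemma state_support:
  assumes K: "exploration_rule K"
  shows "s \<in> set_pmf (expl_state K c k) \<Longrightarrow> Inv c k s"
proof (induction k arbitrary: s)
  case 0
  then show ?case by (auto simp: Inv_def disclosed_def intro: tree_verts.root)
next
  case (Suc k)
  then obtain s0 where "s0 \<in> set_pmf (expl_state K c k)" "s \<in> set_pmf (expl_step K c s0)"
    by auto
  then show ?case using Suc.IH step_support[OF K] by blast
qed

lemma space_PiM_UNIV_countspace:
  assumes "\<And>i. sets (M i) = UNIV"
  shows "space (PiM UNIV M) = UNIV"
proof -
  have "space (M i) = UNIV" for i
    using sets.sets_into_space[of UNIV "M i"] assms[of i] by auto
  then show ?thesis by (simp add: space_PiM)
qed

lemma cyl_sets:
  assumes sets: "\<And>i. sets (M i) = UNIV"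
  shows "{c. \<forall>(i,a)\<in>set xs. c i = a} \<in> sets (PiM UNIV M)"
proof (induction xs)
  case Nil
  have "{c. \<forall>(i,a)\<in>set []. c i = a} = space (PiM UNIV M)"
    using space_PiM_UNIV_countspace[of M, OF sets] by simp
  then show ?case by (metis sets.top)
next
  case (Cons p xs)
  obtain i a where p: "p = (i, a)" by (cases p)
  have "{c. \<forall>(i,a)\<in>set (p # xs). c i = a} =
        {x \<in> space (PiM UNIV M). x i \<in> {a}} \<inter> {c. \<forall>(i,a)\<in>set xs. c i = a}"
    using p space_PiM_UNIV_countspace[of M, OF sets] by auto
  moreover have "{x \<in> space (PiM UNIV M). x i \<in> {a}} \<in> sets (PiM UNIV M)"
    by (rule sets_Collect_single) (auto simp: sets)
  ultimately show ?case using Cons by auto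
qed

lemma local_measurable:
  fixes f :: "('i::countable \<Rightarrow> 'a::countable) \<Rightarrow> 'b"
  assumes sets: "\<And>i. sets (M i) = UNIV"
  assumes loc: "\<And>c. \<exists>F. finite F \<and> (\<forall>c'. (\<forall>i\<in>F. c' i = c i) \<longrightarrow> f c' = f c)"
  assumes setsN: "sets N = UNIV"
  shows "f \<in> measurable (PiM UNIV M) N"
proof -
  have sp: "space (PiM UNIV M) = UNIV" using space_PiM_UNIV_countspace[of M, OF sets] .
  have "UNIV \<in> sets N" using setsN by simp
  then have spN: "space N = UNIV"
    by (metis sets.sets_into_space top.extremum_uniqueI)
  define cyl where "cyl xs = {c. \<forall>(i,a)\<in>set xs. c i = (a::'a)}" for xs :: "('i \<times> 'a) list"
  show ?thesis
  proof (rule measurableI)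
    fix x show "f x \<in> space N" using spN by simp
  next
    fix B assume "B \<in> sets N"
    let ?X = "{xs. cyl xs \<subseteq> f -` B}"
    have eq: "f -` B \<inter> space (PiM UNIV M) = (\<Union>xs\<in>?X. cyl xs)"
    proof
      show "f -` B \<inter> space (PiM UNIV M) \<subseteq> (\<Union>xs\<in>?X. cyl xs)"
      proof
        fix c assume c: "c \<in> f -` B \<inter> space (PiM UNIV M)"
        obtain F where F: "finite F" "\<forall>c'. (\<forall>i\<in>F. c' i = c i) \<longrightarrow> f c' = f c"
          using loc[of c] by auto
        obtain ys where ys: "set ys = F" using F(1) finite_list by blast
        let ?xs = "map (\<lambda>i. (i, c i)) ys"
        have "cyl ?xs = {c'. \<forall>i\<in>F. c' i = c i}" unfolding cyl_def using ys by auto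
        moreover have "{c'. \<forall>i\<in>F. c' i = c i} \<subseteq> f -` B"
        proof
          fix c' assume "c' \<in> {c'. \<forall>i\<in>F. c' i = c i}"
          then have "\<forall>i\<in>F. c' i = c i" by simp
          then have "f c' = f c" by (rule mp[OF spec[OF F(2)]])
          then show "c' \<in> f -` B" using c by simp
        qed
        ultimately have "cyl ?xs \<subseteq> f -` B" by simp
        moreover have "c \<in> cyl ?xs" unfolding cyl_def by auto
        ultimately show "c \<in> (\<Union>xs\<in>?X. cyl xs)" by blast
      qed
    next
      show "(\<Union>xs\<in>?X. cyl xs) \<subseteq> f -` B \<inter> space (PiM UNIV M)"
        unfolding sp by blast
    qed
    have cs: "cyl xs \<in> sets (PiM UNIV M)" for xs
      unfolding cyl_def by (rule cyl_sets[of M, OF sets])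
    have "(\<Union>xs\<in>?X. cyl xs) \<in> sets (PiM UNIV M)"
      by (rule sets.countable_UN''[OF countableI_type cs])
    then show "f -` B \<inter> space (PiM UNIV M) \<in> sets (PiM UNIV M)" using eq by simp
  qed
qed

lemma measure_pmf_measurable_subprob:
  "measure_pmf \<in> measurable (count_space UNIV) (subprob_algebra (count_space UNIV))"
  unfolding measurable_count_space_eq1 using measure_pmf_in_subprob_algebra by blast

lemma local_kernel_measurable:
  fixes f :: "('i::countable \<Rightarrow> 'a::countable) \<Rightarrow> 'b pmf"
  assumes sets: "\<And>i. sets (M i) = UNIV"
  assumes loc: "\<And>c. \<exists>F. finite F \<and> (\<forall>c'. (\<forall>i\<in>F. c' i = c i) \<longrightarrow> f c' = f c)"
  shows "(\<lambda>c. measure_pmf (f c)) \<in> measurable (PiM UNIV M) (subprob_algebra (count_space UNIV))"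
proof -
  have "f \<in> measurable (PiM UNIV M) (count_space UNIV)"
    by (rule local_measurable[where M=M and f=f, OF sets loc]) simp
  from measurable_compose[OF this measure_pmf_measurable_subprob]
  show ?thesis .
qed

lemma local_borel_measurable:
  fixes f :: "('i::countable \<Rightarrow> 'a::countable) \<Rightarrow> ennreal"
  assumes sets: "\<And>i. sets (M i) = UNIV"
  assumes loc: "\<And>c. \<exists>F. finite F \<and> (\<forall>c'. (\<forall>i\<in>F. c' i = c i) \<longrightarrow> f c' = f c)"
  shows "f \<in> borel_measurable (PiM UNIV M)"
proof -
  have "f \<in> measurable (PiM UNIV M) (count_space UNIV)"
    by (rule local_measurable[where M=M and f=f, OF sets loc]) simp
  moreover have "(\<lambda>x. x) \<in> measurable (count_space UNIV) (borel :: ennreal measure)"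
    by simp
  ultimately show ?thesis by (rule measurable_compose)
qed

lemma dTV_ge:
  "\<bar>measure_pmf.prob p A - measure_pmf.prob q A\<bar> \<le> dTV p q"
  unfolding dTV_def
proof (rule cSUP_upper)
  show "bdd_above (range (\<lambda>A. \<bar>measure_pmf.prob p A - measure_pmf.prob q A\<bar>))"
  proof (rule bdd_aboveI[of _ 1], clarify)
    fix B
    have "0 \<le> measure_pmf.prob p B" "measure_pmf.prob p B \<le> 1"
         "0 \<le> measure_pmf.prob q B" "measure_pmf.prob q B \<le> 1" by auto
    then show "\<bar>measure_pmf.prob p B - measure_pmf.prob q B\<bar> \<le> 1" by linarith
  qed
qed simp

lemma dTV_nonneg: "0 \<le> dTV p q"
  using dTV_ge[of p "{}" q] by simp

lemma optimal_coupling: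
  fixes p q :: "nat pmf"
  shows "\<exists>C. map_pmf fst C = p \<and> map_pmf snd C = q \<and> measure_pmf.prob C {z. fst z \<noteq> snd z} \<le> dTV p q"
proof -
  define mn where "mn x = min (pmf p x) (pmf q x)" for x
  define r1 where "r1 x = pmf p x - mn x" for x
  define r2 where "r2 x = pmf q x - mn x" for x
  have mn0: "0 \<le> mn x" for x by (simp add: mn_def)
  have r10: "0 \<le> r1 x" for x by (simp add: r1_def mn_def)
  have r20: "0 \<le> r2 x" for x by (simp add: r2_def mn_def)
  define Mn where "Mn = (\<integral>\<^sup>+x. ennreal (mn x) \<partial>count_space UNIV)"
  define R1 where "R1 = (\<integral>\<^sup>+x. ennreal (r1 x) \<partial>count_space UNIV)"
  define R2 where "R2 = (\<integral>\<^sup>+x. ennreal (r2 x) \<partial>count_space UNIV)"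
  have P1: "(\<integral>\<^sup>+x. ennreal (pmf p x) \<partial>count_space UNIV) = 1"
    by (simp add: nn_integral_pmf)
  have Q1: "(\<integral>\<^sup>+x. ennreal (pmf q x) \<partial>count_space UNIV) = 1"
    by (simp add: nn_integral_pmf)
  have "(\<integral>\<^sup>+x. ennreal (pmf p x) \<partial>count_space UNIV) = (\<integral>\<^sup>+x. ennreal (mn x) + ennreal (r1 x) \<partial>count_space UNIV)"
  proof (rule nn_integral_cong)
    fix x
    have "ennreal (mn x) + ennreal (r1 x) = ennreal (mn x + r1 x)" using mn0 r10 by (simp add: ennreal_plus)
    then show "ennreal (pmf p x) = ennreal (mn x) + ennreal (r1 x)" by (simp add: r1_def)
  qed
  also have "\<dots> = Mn + R1" unfolding Mn_def R1_def by (rule nn_integral_add) auto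
  finally have MR1: "Mn + R1 = 1" using P1 by simp
  have "(\<integral>\<^sup>+x. ennreal (pmf q x) \<partial>count_space UNIV) = (\<integral>\<^sup>+x. ennreal (mn x) + ennreal (r2 x) \<partial>count_space UNIV)"
  proof (rule nn_integral_cong)
    fix x
    have "ennreal (mn x) + ennreal (r2 x) = ennreal (mn x + r2 x)" using mn0 r20 by (simp add: ennreal_plus)
    then show "ennreal (pmf q x) = ennreal (mn x) + ennreal (r2 x)" by (simp add: r2_def)
  qed
  also have "\<dots> = Mn + R2" unfolding Mn_def R2_def by (rule nn_integral_add) auto
  finally have MR2: "Mn + R2 = 1" using Q1 by simp
  have Mnfin: "Mn \<noteq> \<top>" using MR1 by (metis ennreal_add_eq_top ennreal_one_neq_top)
  have R12: "R1 = R2" using MR1 MR2 Mnfin ennreal_add_left_cancel[of Mn R1 R2] by simp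
  have "R1 \<le> Mn + R1" by simp
  then have R1le: "R1 \<le> 1" using MR1 by simp
  define b where "b = enn2real R1"
  have "R1 \<noteq> \<top>" using R1le by (auto simp: top_unique)
  then have R1b: "R1 = ennreal b" unfolding b_def by (simp add: ennreal_enn2real_if)
  have b0: "0 \<le> b" by (simp add: b_def)
  define A where "A = {x. pmf q x < pmf p x}"
  have bdTV: "b \<le> dTV p q"
  proof -
    have "emeasure (measure_pmf p) A = (\<integral>\<^sup>+x. ennreal (pmf p x) * indicator A x \<partial>count_space UNIV)"
      by (simp add: nn_integral_pmf[symmetric] nn_integral_count_space_indicator)
    also have "\<dots> = (\<integral>\<^sup>+x. ennreal (pmf q x) * indicator A x + ennreal (r1 x) \<partial>count_space UNIV)"
      by (rule nn_integral_cong)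
         (auto simp: A_def r1_def mn_def indicator_def min_def simp flip: ennreal_plus)
    also have "\<dots> = emeasure (measure_pmf q) A + R1"
      by (subst nn_integral_add) (auto simp: R1_def nn_integral_pmf[symmetric] nn_integral_count_space_indicator)
    finally have "emeasure (measure_pmf p) A = emeasure (measure_pmf q) A + R1" .
    then have "measure_pmf.prob p A = measure_pmf.prob q A + b"
      by (simp add: measure_pmf.emeasure_eq_measure R1b b0 flip: ennreal_plus)
    then show ?thesis using dTV_ge[of p A q] by simp
  qed
  show ?thesis
  proof (cases "b = 0")
    case True
    then have "R1 = 0" "R2 = 0" using R1b R12 by auto
    then have "\<forall>x. r1 x = 0" "\<forall>x. r2 x = 0"
      unfolding R1_def R2_def
      using r10 r20 by (auto simp: nn_integral_0_iff_AE AE_count_space)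
    then have "pmf p x - mn x = 0 \<and> pmf q x - mn x = 0" for x unfolding r1_def r2_def by blast
    then have "pmf p x = pmf q x" for x by (metis diff_0_right eq_iff_diff_eq_0)
    then have pq: "p = q" by (rule pmf_eqI)
    let ?C = "map_pmf (\<lambda>x. (x, x)) p"
    have "map_pmf fst ?C = p" "map_pmf snd ?C = q" using pq by (simp_all add: pmf.map_comp o_def)
    moreover have "measure_pmf.prob ?C {z. fst z \<noteq> snd z} = 0"
      by (simp add: measure_map_pmf)
    ultimately show ?thesis using dTV_nonneg[of p q] by (intro exI[of _ ?C]) simp
  next
    case False
    then have bpos: "0 < b" using b0 by simp
    have ne: "\<And>x. 0 \<le> r2 x / b" using r20 b0 by simp
    have prob2: "(\<integral>\<^sup>+x. ennreal (r2 x / b) \<partial>count_space UNIV) = 1"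
    proof -
      have "(\<integral>\<^sup>+x. ennreal (r2 x / b) \<partial>count_space UNIV) = (\<integral>\<^sup>+x. ennreal (r2 x) * ennreal (1/b) \<partial>count_space UNIV)"
      proof (rule nn_integral_cong)
        fix x
        have "ennreal (r2 x) * ennreal (1/b) = ennreal (r2 x * (1/b))" using r20 b0 by (subst ennreal_mult) auto
        then show "ennreal (r2 x / b) = ennreal (r2 x) * ennreal (1/b)" by simp
      qed
      also have "\<dots> = R2 * ennreal (1/b)" unfolding R2_def by (rule nn_integral_multc) simp
      also have "\<dots> = ennreal (b * (1/b))" unfolding R12[symmetric] R1b using b0 by (subst ennreal_mult) auto
      also have "\<dots> = 1" using bpos by simp
      finally show ?thesis .
    qed
    define P2 where "P2 = embed_pmf (\<lambda>x. r2 x / b)"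
    have pmfP2: "pmf P2 x = r2 x / b" for x unfolding P2_def by (rule pmf_embed_pmf[OF ne prob2])
    define t where "t x = (if pmf p x = 0 then 1 else mn x / pmf p x)" for x
    have t0: "0 \<le> t x" for x using mn0 by (simp add: t_def)
    have t1: "t x \<le> 1" for x using mn0 by (auto simp: t_def mn_def divide_le_eq_1)
    have pt: "pmf p x * t x = mn x" for x
      by (auto simp: t_def mn_def)
    have p1t: "pmf p x * (1 - t x) = r1 x" for x
      using pt[of x] by (simp add: r1_def algebra_simps)
    define G where "G x = (\<lambda>bb. if bb then return_pmf (x, x) else map_pmf (\<lambda>y. (x, y)) P2)" for x
    define C where "C = bind_pmf p (\<lambda>x. bind_pmf (bernoulli_pmf (t x)) (G x))"
    have fstC: "map_pmf fst C = p"
    proof -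
      have "map_pmf fst (G x bb) = return_pmf x" for x bb
        by (cases bb) (simp_all add: G_def pmf.map_comp o_def)
      then show ?thesis by (simp add: C_def map_bind_pmf bind_return_pmf')
    qed
    have sndC: "map_pmf snd C = q"
    proof (rule pmf_eqI)
      fix y
      have "ennreal (pmf (map_pmf snd C) y) =
            (\<integral>\<^sup>+x. ennreal (pmf (map_pmf snd (bind_pmf (bernoulli_pmf (t x)) (G x))) y) \<partial>measure_pmf p)"
        by (simp add: C_def map_bind_pmf ennreal_pmf_bind)
      also have "\<dots> = (\<integral>\<^sup>+x. ennreal (pmf p x) * (ennreal (indicator {y} x) * ennreal (t x)
                         + ennreal (pmf P2 y) * ennreal (1 - t x)) \<partial>count_space UNIV)"
      proof -
        have "ennreal (pmf (map_pmf snd (bind_pmf (bernoulli_pmf (t x)) (G x))) y) =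
              ennreal (indicator {y} x) * ennreal (t x) + ennreal (pmf P2 y) * ennreal (1 - t x)" for x
        proof -
          have "ennreal (pmf (map_pmf snd (bind_pmf (bernoulli_pmf (t x)) (G x))) y) =
               (\<integral>\<^sup>+bb. ennreal (pmf (map_pmf snd (G x bb)) y) \<partial>measure_pmf (bernoulli_pmf (t x)))"
            by (simp add: map_bind_pmf ennreal_pmf_bind)
          also have "\<dots> = ennreal (pmf (map_pmf snd (G x True)) y) * ennreal (t x)
                        + ennreal (pmf (map_pmf snd (G x False)) y) * ennreal (1 - t x)"
            by (subst nn_integral_bernoulli_pmf) (auto simp: t0 t1)
          also have "\<dots> = ennreal (indicator {y} x) * ennreal (t x) + ennreal (pmf P2 y) * ennreal (1 - t x)"
            by (simp add: G_def pmf.map_comp o_def indicator_def)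
          finally show ?thesis .
        qed
        then show ?thesis by (simp add: nn_integral_measure_pmf)
      qed
      also have "\<dots> = (\<integral>\<^sup>+x. ennreal (mn y) * indicator {y} x + ennreal (r1 x) * ennreal (pmf P2 y) \<partial>count_space UNIV)"
      proof (rule nn_integral_cong)
        fix x
        have "ennreal (pmf p x) * (ennreal (indicator {y} x) * ennreal (t x) + ennreal (pmf P2 y) * ennreal (1 - t x))
              = ennreal (indicator {y} x * (pmf p x * t x)) + ennreal (pmf p x * (1 - t x) * pmf P2 y)"
          using t0[of x] t1[of x]
          by (simp add: distrib_left ennreal_mult[symmetric] mult_ac)
        also have "\<dots> = ennreal (mn y) * indicator {y} x + ennreal (r1 x) * ennreal (pmf P2 y)"
          by (auto simp: pt p1t indicator_def r10 ennreal_mult)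
        finally show "ennreal (pmf p x) * (ennreal (indicator {y} x) * ennreal (t x) + ennreal (pmf P2 y) * ennreal (1 - t x))
              = ennreal (mn y) * indicator {y} x + ennreal (r1 x) * ennreal (pmf P2 y)" .
      qed
      also have "\<dots> = ennreal (mn y) + R1 * ennreal (pmf P2 y)"
        by (subst nn_integral_add) (auto simp: R1_def nn_integral_multc)
      also have "\<dots> = ennreal (mn y) + ennreal (r2 y)"
        using bpos r20[of y] by (simp add: R1b pmfP2 flip: ennreal_mult)
      also have "\<dots> = ennreal (mn y + r2 y)"
        using mn0 r20 by (simp add: ennreal_plus)
      also have "\<dots> = ennreal (pmf q y)" by (simp add: r2_def)
      finally show "pmf (map_pmf snd C) y = pmf q y" by simp
    qed
    have "emeasure (measure_pmf C) {z. fst z \<noteq> snd z} \<le> R1"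
    proof -
      have "emeasure (measure_pmf C) {z. fst z \<noteq> snd z} =
            (\<integral>\<^sup>+x. emeasure (measure_pmf (bind_pmf (bernoulli_pmf (t x)) (G x))) {z. fst z \<noteq> snd z} \<partial>measure_pmf p)"
        by (simp add: C_def)
      also have "\<dots> \<le> (\<integral>\<^sup>+x. ennreal (1 - t x) \<partial>measure_pmf p)"
      proof (rule nn_integral_mono)
        fix x
        have "emeasure (measure_pmf (bind_pmf (bernoulli_pmf (t x)) (G x))) {z. fst z \<noteq> snd z}
             = emeasure (measure_pmf (G x True)) {z. fst z \<noteq> snd z} * ennreal (t x)
               + emeasure (measure_pmf (G x False)) {z. fst z \<noteq> snd z} * ennreal (1 - t x)"
          by (simp add: t0 t1)
        also have "\<dots> \<le> 0 * ennreal (t x) + 1 * ennreal (1 - t x)"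
          by (intro add_mono mult_right_mono) (auto simp: G_def measure_pmf.emeasure_le_1)
        finally show "emeasure (measure_pmf (bind_pmf (bernoulli_pmf (t x)) (G x))) {z. fst z \<noteq> snd z}
                       \<le> ennreal (1 - t x)" by simp
      qed
      also have "\<dots> = R1"
        unfolding R1_def nn_integral_measure_pmf
      proof (rule nn_integral_cong)
        fix x
        have "ennreal (pmf p x) * ennreal (1 - t x) = ennreal (pmf p x * (1 - t x))"
          using t1[of x] by (subst ennreal_mult) auto
        then show "ennreal (pmf p x) * ennreal (1 - t x) = ennreal (r1 x)" by (simp add: p1t)
      qed
      finally show ?thesis .
    qed
    then have "measure_pmf.prob C {z. fst z \<noteq> snd z} \<le> b"
      by (simp add: measure_pmf.emeasure_eq_measure R1b b0)
    then show ?thesis using fstC sndC bdTV by (intro exI[of _ C]) simp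
  qed
qed

lemma count_swap:
  "(\<integral>\<^sup>+ x. \<integral>\<^sup>+ y. f x y \<partial>count_space UNIV \<partial>count_space UNIV) =
   (\<integral>\<^sup>+ y. \<integral>\<^sup>+ x. f x y \<partial>count_space UNIV \<partial>count_space UNIV)"
  using nn_integral_fst_count_space[of "\<lambda>(x,y). f x y"] nn_integral_snd_count_space[of "\<lambda>(x,y). f x y"]
  by simp

lemma space_PiM_pmf: "space (PiM UNIV (\<lambda>v. measure_pmf (Cp v))) = UNIV"
  by (simp add: space_PiM)

lemma PiM_marginal:
  fixes Cp :: "'i \<Rightarrow> 'a pmf" and g :: "'a \<Rightarrow> 'b"
  shows "distr (PiM UNIV (\<lambda>v. measure_pmf (Cp v))) (PiM UNIV (\<lambda>v. measure_pmf (map_pmf g (Cp v)))) (\<lambda>c v. g (c v))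
         = PiM UNIV (\<lambda>v. measure_pmf (map_pmf g (Cp v)))"
    (is "distr ?K ?I ?t = ?I")
proof (rule measure_eqI_PiM_infinite[symmetric, OF refl])
  interpret prob_space ?I
    by (intro prob_space_PiM) (simp add: measure_pmf.prob_space_axioms)
  show "finite_measure ?I"
    by unfold_locales
  have meas: "?t \<in> measurable ?K ?I"
    by (rule measurable_PiM_single') (auto simp: space_PiM intro!: measurable_compose[OF measurable_component_singleton])
  fix A J assume J: "finite J" "J \<subseteq> UNIV" and A: "\<And>i. i \<in> J \<Longrightarrow> A i \<in> sets (measure_pmf (map_pmf g (Cp i)))"
  have "?I (prod_emb UNIV (\<lambda>i. measure_pmf (map_pmf g (Cp i))) J (Pi\<^sub>E J A)) = (\<Prod>j\<in>J. emeasure (measure_pmf (map_pmf g (Cp j))) (A j))"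
    using J by (intro emeasure_PiM_emb) (auto simp: measure_pmf.prob_space_axioms)
  also have "\<dots> = (\<Prod>j\<in>J. emeasure (measure_pmf (Cp j)) (g -` A j))"
    by simp
  also have "\<dots> = ?K (prod_emb UNIV (\<lambda>i. measure_pmf (Cp i)) J (Pi\<^sub>E J (\<lambda>j. g -` A j)))"
    using J by (intro emeasure_PiM_emb[symmetric]) (auto simp: measure_pmf.prob_space_axioms)
  also have "prod_emb UNIV (\<lambda>i. measure_pmf (Cp i)) J (Pi\<^sub>E J (\<lambda>j. g -` A j))
        = ?t -` prod_emb UNIV (\<lambda>i. measure_pmf (map_pmf g (Cp i))) J (Pi\<^sub>E J A) \<inter> space ?K"
    by (auto simp: prod_emb_def space_PiM PiE_iff)
  also have "?K \<dots> = distr ?K ?I ?t (prod_emb UNIV (\<lambda>i. measure_pmf (map_pmf g (Cp i))) J (Pi\<^sub>E J A))"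
    using J A by (intro emeasure_distr[symmetric] meas sets_PiM_I) auto
  finally show "?I (prod_emb UNIV (\<lambda>i. measure_pmf (map_pmf g (Cp i))) J (Pi\<^sub>E J A)) =
     distr ?K ?I ?t (prod_emb UNIV (\<lambda>i. measure_pmf (map_pmf g (Cp i))) J (Pi\<^sub>E J A))" .
qed simp

lemma PiM_indep:
  fixes Cp :: "'i \<Rightarrow> 'a pmf" and g :: "('i \<Rightarrow> 'a) \<Rightarrow> ennreal" and h :: "'a \<Rightarrow> ennreal"
  assumes gm: "g \<in> borel_measurable (PiM UNIV (\<lambda>v. measure_pmf (Cp v)))"
  assumes inv: "\<And>c x. g (c(v := x)) = g c"
  shows "(\<integral>\<^sup>+c. g c * h (c v) \<partial>PiM UNIV (\<lambda>v. measure_pmf (Cp v)))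
         = (\<integral>\<^sup>+c. g c \<partial>PiM UNIV (\<lambda>v. measure_pmf (Cp v))) * (\<integral>\<^sup>+x. h x \<partial>measure_pmf (Cp v))"
proof -
  let ?M = "\<lambda>v. measure_pmf (Cp v)"
  let ?Q = "PiM (UNIV - {v}) ?M"
  let ?P = "?M v \<Otimes>\<^sub>M ?Q"
  have U: "insert v (UNIV - {v}) = UNIV" by auto
  have D: "distr ?P (PiM UNIV ?M) (\<lambda>(x, X). X(v := x)) = PiM UNIV ?M"
    using distr_pair_PiM_eq_PiM[of "UNIV - {v}" ?M v] U by (simp add: measure_pmf.prob_space_axioms)
  interpret Q: prob_space ?Q
    by (intro prob_space_PiM) (simp add: measure_pmf.prob_space_axioms)
  interpret pair_sigma_finite "?M v" ?Q
    by unfold_locales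
  have um: "(\<lambda>(x, X). X(v := x)) \<in> measurable ?P (PiM UNIV ?M)"
  proof -
    have "(\<lambda>p i. ((snd p)(v := fst p)) i) \<in> measurable ?P (PiM UNIV ?M)"
    proof (rule measurable_PiM_single')
      fix i :: 'i assume "i \<in> UNIV"
      show "(\<lambda>p. ((snd p)(v := fst p)) i) \<in> measurable ?P (?M i)"
      proof (cases "i = v")
        case True
        then show ?thesis by simp
      next
        case False
        then have "(\<lambda>p. ((snd p)(v := fst p)) i) = (\<lambda>p. snd p i)" by auto
        moreover have "(\<lambda>p. snd p i) \<in> measurable ?P (?M i)"
          using False by (intro measurable_compose[OF measurable_snd] measurable_component_singleton) auto
        ultimately show ?thesis by simp
      qed
    qed (auto simp: space_PiM)
    moreover have "(\<lambda>p i. ((snd p)(v := fst p)) i) = (\<lambda>(x, X). X(v := x))" by (auto simp: fun_eq_iff)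
    ultimately show ?thesis by metis
  qed
  have gQ: "(\<lambda>p. g ((snd p)(v := fst p))) \<in> borel_measurable ?P"
    using measurable_compose[OF um gm] by (simp add: case_prod_beta')
  have gQ2: "g \<in> borel_measurable ?Q"
  proof -
    have "(\<lambda>X. (undefined, X)) \<in> measurable ?Q ?P"
      by (rule measurable_Pair) auto
    from measurable_compose[OF this gQ]
    have "(\<lambda>X. g (X(v := undefined))) \<in> borel_measurable ?Q" by simp
    then show ?thesis by (simp add: inv)
  qed
  have hM: "(\<lambda>p. h (fst p)) \<in> borel_measurable ?P"
    by (rule measurable_compose[OF measurable_fst]) simp
  have key: "(\<integral>\<^sup>+c. g c * h' (c v) \<partial>PiM UNIV ?M) =
             (\<integral>\<^sup>+x. h' x * (\<integral>\<^sup>+X. g X \<partial>?Q) \<partial>?M v)" for h' :: "'a \<Rightarrow> ennreal"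
  proof -
    have hM': "(\<lambda>p. h' (fst p)) \<in> borel_measurable ?P"
      by (rule measurable_compose[OF measurable_fst]) simp
    have hc: "(\<lambda>c. h' (c v)) \<in> borel_measurable (PiM UNIV ?M)"
      by (rule measurable_compose[OF measurable_component_singleton[of v UNIV]]) simp_all
    have "(\<integral>\<^sup>+c. g c * h' (c v) \<partial>PiM UNIV ?M) = (\<integral>\<^sup>+c. g c * h' (c v) \<partial>distr ?P (PiM UNIV ?M) (\<lambda>(x, X). X(v := x)))"
      by (simp add: D)
    also have "\<dots> = (\<integral>\<^sup>+p. g ((snd p)(v := fst p)) * h' (fst p) \<partial>?P)"
      by (subst nn_integral_distr[OF um])
         (auto intro!: borel_measurable_times_ennreal gm hc simp: case_prod_beta')
    also have "\<dots> = (\<integral>\<^sup>+x. \<integral>\<^sup>+X. g (X(v := x)) * h' x \<partial>?Q \<partial>?M v)"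
      by (subst Q.nn_integral_fst[symmetric]) (auto intro!: borel_measurable_times_ennreal gQ hM')
    also have "\<dots> = (\<integral>\<^sup>+x. h' x * (\<integral>\<^sup>+X. g X \<partial>?Q) \<partial>?M v)"
      by (simp add: inv nn_integral_multc[OF gQ2] mult.commute)
    finally show ?thesis .
  qed
  have inner: "(\<integral>\<^sup>+X. g (X(v := x)) \<partial>?Q) = (\<integral>\<^sup>+X. g X \<partial>?Q)" for x
    using inv by simp
  have "(\<integral>\<^sup>+c. g c * h (c v) \<partial>PiM UNIV ?M) = (\<integral>\<^sup>+x. h x * (\<integral>\<^sup>+X. g X \<partial>?Q) \<partial>?M v)"
    using key[of h] by simp
  also have "\<dots> = (\<integral>\<^sup>+X. g X \<partial>?Q) * (\<integral>\<^sup>+x. h x \<partial>?M v)"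
    by (simp add: nn_integral_multc mult.commute)
  finally have 1: "(\<integral>\<^sup>+c. g c * h (c v) \<partial>PiM UNIV ?M) = (\<integral>\<^sup>+X. g X \<partial>?Q) * (\<integral>\<^sup>+x. h x \<partial>?M v)" .
  have "(\<integral>\<^sup>+c. g c * 1 \<partial>PiM UNIV ?M) = (\<integral>\<^sup>+x. 1 * (\<integral>\<^sup>+X. g X \<partial>?Q) \<partial>?M v)"
    using key[of "\<lambda>_. 1"] by simp
  then have 2: "(\<integral>\<^sup>+c. g c \<partial>PiM UNIV ?M) = (\<integral>\<^sup>+X. g X \<partial>?Q)"
    by (simp add: measure_pmf.emeasure_space_1)
  show ?thesis using 1 2 by simp
qed

abbreviation "Tn c n \<equiv> {u \<in> tree_verts c. length u \<le> n}"

lemma step_cong: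
  "disclosed c (fst s) = disclosed c' (fst s) \<Longrightarrow> expl_step K c s = expl_step K c' s"
  by (cases s) (simp add: expl_step_def)

lemma step_mono: "s' \<in> set_pmf (expl_step K c s) \<Longrightarrow> fst s \<subseteq> fst s'"
  by (cases s) (auto simp: expl_step_def split: if_splits option.splits)

lemma Inv_disc_eq:
  assumes "Inv c k s" "\<forall>u\<in>fst s. c' u = c u"
  shows "disclosed c' (fst s) = disclosed c (fst s)"
  using assms by (intro disc_eq) (auto simp: Inv_def)

lemma Inv_disc_eq_Tn:
  assumes "Inv c k s" "\<forall>u\<in>Tn c n. c' u = c u" "k \<le> n"
  shows "disclosed c' (fst s) = disclosed c (fst s)"
proof -
  have "\<forall>u\<in>fst s. c' u = c u"
  proof
    fix u assume u: "u \<in> fst s"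
    then have "u \<in> tree_verts c" "length u \<le> n" using assms(1,3) by (auto simp: Inv_def)
    then show "c' u = c u" using assms(2) by blast
  qed
  then show ?thesis using Inv_disc_eq[OF assms(1)] by blast
qed

lemma expl_state_local:
  assumes K: "exploration_rule K" and eq: "\<forall>u\<in>Tn c n. c' u = c u"
  shows "k \<le> Suc n \<Longrightarrow> expl_state K c' k = expl_state K c k"
proof (induction k)
  case 0
  then show ?case by simp
next
  case (Suc k)
  then have IH: "expl_state K c' k = expl_state K c k" by simp
  show ?case
  proof -
    have "expl_state K c' (Suc k) = bind_pmf (expl_state K c k) (expl_step K c')"
      by (simp add: IH)
    also have "\<dots> = bind_pmf (expl_state K c k) (expl_step K c)"
    proof (rule bind_pmf_cong[OF refl])
      fix s assume "s \<in> set_pmf (expl_state K c k)"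
      then have "Inv c k s" using state_support[OF K] by blast
      then have "disclosed c' (fst s) = disclosed c (fst s)"
        using Inv_disc_eq_Tn[OF _ eq] Suc.prems by simp
      then show "expl_step K c' s = expl_step K c s" by (rule step_cong)
    qed
    finally show ?thesis by simp
  qed
qed

definition proj :: "(nat list \<Rightarrow> nat) \<Rightarrow> nat list set \<times> nat list list \<times> bool \<Rightarrow> expl" where
  "proj c s = (disclosed c (fst s), fst (snd s))"

lemma exploration_proj: "exploration K c n = map_pmf (proj c) (expl_state K c n)"
  unfolding exploration_def proj_def by (rule map_pmf_cong) auto

lemma exploration_local:
  assumes K: "exploration_rule K" and eq: "\<forall>u\<in>Tn c n. c' u = c u"
  shows "exploration K c' n = exploration K c n"
proof -
  have "exploration K c' n = map_pmf (proj c') (expl_state K c n)"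
    unfolding exploration_proj using expl_state_local[OF K eq] by simp
  also have "\<dots> = map_pmf (proj c) (expl_state K c n)"
  proof (rule map_pmf_cong[OF refl])
    fix s assume "s \<in> set_pmf (expl_state K c n)"
    then have "Inv c n s" using state_support[OF K] by blast
    then show "proj c' s = proj c s" unfolding proj_def using Inv_disc_eq_Tn[OF _ eq] by simp
  qed
  finally show ?thesis by (simp add: exploration_proj)
qed

lemma sets_GWP_factor:
  "sets (if v = [] then measure_pmf D else measure_pmf (map_pmf (\<lambda>k. k - 1) Ds)) = UNIV"
  by simp

lemma exploration_kernel_measurable:
  assumes K: "exploration_rule K"
  shows "(\<lambda>c. measure_pmf (exploration K c n)) \<in> measurable (GWP D Ds) (subprob_algebra (count_space UNIV))"
  unfolding GWP_def
proof (rule local_kernel_measurable)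
  fix i :: "nat list"
  show "sets (if i = [] then measure_pmf D else measure_pmf (map_pmf (\<lambda>k. k - 1) Ds)) = UNIV" by simp
next
  fix c :: "nat list \<Rightarrow> nat"
  show "\<exists>F. finite F \<and> (\<forall>c'. (\<forall>i\<in>F. c' i = c i) \<longrightarrow> exploration K c' n = exploration K c n)"
    by (rule exI[of _ "Tn c n"]) (auto simp: finite_tree_depth intro: exploration_local[OF K])
qed

definition jstep :: "(expl \<Rightarrow> nat list option pmf) \<Rightarrow> (nat list \<Rightarrow> nat) \<Rightarrow> (nat list \<Rightarrow> nat) \<Rightarrow>
   (nat list set \<times> nat list list \<times> bool) \<times> (nat list set \<times> nat list list \<times> bool) \<Rightarrow>
   ((nat list set \<times> nat list list \<times> bool) \<times> (nat list set \<times> nat list list \<times> bool)) pmf" where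
  "jstep K c1 c2 ss = (if fst ss = snd ss \<and> disclosed c1 (fst (fst ss)) = disclosed c2 (fst (snd ss))
       then map_pmf (\<lambda>x. (x, x)) (expl_step K c1 (fst ss))
       else pair_pmf (expl_step K c1 (fst ss)) (expl_step K c2 (snd ss)))"

fun jstate where
  "jstate K c1 c2 0 = return_pmf (({[]}, [], False), ({[]}, [], False))"
| "jstate K c1 c2 (Suc n) = bind_pmf (jstate K c1 c2 n) (jstep K c1 c2)"

lemma jstep_fst: "map_pmf fst (jstep K c1 c2 ss) = expl_step K c1 (fst ss)"
  by (auto simp: jstep_def pmf.map_comp o_def map_fst_pair_pmf)

lemma jstep_snd: "map_pmf snd (jstep K c1 c2 ss) = expl_step K c2 (snd ss)"
proof (cases "fst ss = snd ss \<and> disclosed c1 (fst (fst ss)) = disclosed c2 (fst (snd ss))")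
  case True
  then have h1: "fst ss = snd ss" and h2: "disclosed c1 (fst (fst ss)) = disclosed c2 (fst (snd ss))" by auto
  have "expl_step K c1 (fst ss) = expl_step K c2 (fst ss)" by (rule step_cong) (use h1 h2 in simp)
  then have e: "expl_step K c1 (fst ss) = expl_step K c2 (snd ss)" using h1 by simp
  show ?thesis unfolding jstep_def if_P[OF True] by (simp add: pmf.map_comp o_def e)
next
  case False
  show ?thesis unfolding jstep_def if_not_P[OF False] by (simp add: map_snd_pair_pmf)
qed

lemma jstate_fst: "map_pmf fst (jstate K c1 c2 n) = expl_state K c1 n"
  by (induction n) (simp_all add: map_bind_pmf jstep_fst bind_map_pmf[symmetric])

lemma jstate_snd: "map_pmf snd (jstate K c1 c2 n) = expl_state K c2 n"
  by (induction n) (simp_all add: map_bind_pmf jstep_snd bind_map_pmf[symmetric])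

lemma jstate_supp1: "ss \<in> set_pmf (jstate K c1 c2 n) \<Longrightarrow> fst ss \<in> set_pmf (expl_state K c1 n)"
  using jstate_fst[of K c1 c2 n] by (metis pmf.set_map imageI)

lemma jstate_supp2: "ss \<in> set_pmf (jstate K c1 c2 n) \<Longrightarrow> snd ss \<in> set_pmf (expl_state K c2 n)"
  using jstate_snd[of K c1 c2 n] by (metis pmf.set_map imageI)

lemma jstate_inv:
  assumes K: "exploration_rule K"
  shows "ss \<in> set_pmf (jstate K c1 c2 n) \<Longrightarrow> fst ss \<noteq> snd ss \<Longrightarrow> \<not> fst (fst ss) \<subseteq> {u. c1 u = c2 u}"
proof (induction n arbitrary: ss)
  case 0
  then show ?case by simp
next
  case (Suc n)
  from Suc.prems obtain tt where tt: "tt \<in> set_pmf (jstate K c1 c2 n)" and ss: "ss \<in> set_pmf (jstep K c1 c2 tt)"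
    by auto
  have I1: "Inv c1 n (fst tt)" using jstate_supp1[OF tt] state_support[OF K] by blast
  have s1: "fst ss \<in> set_pmf (expl_step K c1 (fst tt))"
    using ss jstep_fst[of K c1 c2 tt] by (metis pmf.set_map imageI)
  have mono: "fst (fst tt) \<subseteq> fst (fst ss)" by (rule step_mono[OF s1])
  show ?case
  proof (cases "fst tt = snd tt \<and> disclosed c1 (fst (fst tt)) = disclosed c2 (fst (snd tt))")
    case True
    then have "fst ss = snd ss" using ss by (auto simp: jstep_def)
    then show ?thesis using Suc.prems by simp
  next
    case False
    show ?thesis
    proof (cases "fst tt = snd tt")
      case True
      with False have ne: "disclosed c1 (fst (fst tt)) \<noteq> disclosed c2 (fst (fst tt))" by simp
      have "\<not> fst (fst tt) \<subseteq> {u. c1 u = c2 u}"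
      proof
        assume "fst (fst tt) \<subseteq> {u. c1 u = c2 u}"
        then have "\<forall>u\<in>fst (fst tt). c2 u = c1 u" by auto
        then have "disclosed c2 (fst (fst tt)) = disclosed c1 (fst (fst tt))"
          by (rule Inv_disc_eq[OF I1])
        then show False using ne by simp
      qed
      then show ?thesis using mono by blast
    next
      case False
      then have "\<not> fst (fst tt) \<subseteq> {u. c1 u = c2 u}" using Suc.IH[OF tt] by simp
      then show ?thesis using mono by blast
    qed
  qed
qed

definition jexpl where
  "jexpl K c1 c2 n = map_pmf (\<lambda>ss. (proj c1 (fst ss), proj c2 (snd ss))) (jstate K c1 c2 n)"

lemma jexpl_fst: "map_pmf fst (jexpl K c1 c2 n) = exploration K c1 n"
proof -
  have "map_pmf fst (jexpl K c1 c2 n) = map_pmf (proj c1) (map_pmf fst (jstate K c1 c2 n))"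
    by (simp add: jexpl_def pmf.map_comp o_def)
  also have "\<dots> = exploration K c1 n" by (simp only: jstate_fst exploration_proj)
  finally show ?thesis .
qed

lemma jexpl_snd: "map_pmf snd (jexpl K c1 c2 n) = exploration K c2 n"
proof -
  have "map_pmf snd (jexpl K c1 c2 n) = map_pmf (proj c2) (map_pmf snd (jstate K c1 c2 n))"
    by (simp add: jexpl_def pmf.map_comp o_def)
  also have "\<dots> = exploration K c2 n" by (simp only: jstate_snd exploration_proj)
  finally show ?thesis .
qed

lemma expl_agree_refl: "expl_agree X X"
  unfolding expl_agree_def expl_iso_def
  by (rule exI[of _ id], rule exI[of _ id]) (simp add: option.map_id)

lemma jexpl_bad:
  assumes K: "exploration_rule K"
  shows "emeasure (measure_pmf (jexpl K c1 c2 n)) {p. \<not> expl_agree (fst p) (snd p)}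
         \<le> emeasure (measure_pmf (expl_state K c1 n)) {s. \<not> fst s \<subseteq> {u. c1 u = c2 u}}"
proof -
  let ?A = "{u. c1 u = c2 u}"
  let ?f = "\<lambda>ss. (proj c1 (fst ss), proj c2 (snd ss))"
  let ?J = "jstate K c1 c2 n"
  have "emeasure (measure_pmf (jexpl K c1 c2 n)) {p. \<not> expl_agree (fst p) (snd p)}
       = emeasure (measure_pmf ?J) (?f -` {p. \<not> expl_agree (fst p) (snd p)})"
    by (simp add: jexpl_def)
  also have "\<dots> = emeasure (measure_pmf ?J) (?f -` {p. \<not> expl_agree (fst p) (snd p)} \<inter> set_pmf ?J)"
    by (simp add: emeasure_Int_set_pmf)
  also have "\<dots> \<le> emeasure (measure_pmf ?J) {ss. \<not> fst (fst ss) \<subseteq> ?A}"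
  proof (rule emeasure_mono)
    show "?f -` {p. \<not> expl_agree (fst p) (snd p)} \<inter> set_pmf ?J \<subseteq> {ss. \<not> fst (fst ss) \<subseteq> ?A}"
    proof (rule subsetI)
      fix ss assume h: "ss \<in> ?f -` {p. \<not> expl_agree (fst p) (snd p)} \<inter> set_pmf ?J"
      obtain s1 s2 where sseq: "ss = (s1, s2)" by (cases ss)
      have bad: "\<not> expl_agree (proj c1 s1) (proj c2 s2)" using h sseq by simp
      have ss: "(s1, s2) \<in> set_pmf ?J" using h sseq by simp
      show "ss \<in> {ss. \<not> fst (fst ss) \<subseteq> ?A}"
      proof (rule ccontr)
        assume "ss \<notin> {ss. \<not> fst (fst ss) \<subseteq> ?A}"
        then have sub: "fst s1 \<subseteq> ?A" using sseq by simp
        have "s1 = s2" using jstate_inv[OF K ss] sub by auto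
        have I1: "Inv c1 n s1" using jstate_supp1[OF ss] state_support[OF K] by auto
        have "\<forall>u\<in>fst s1. c2 u = c1 u" using sub by auto
        then have "disclosed c2 (fst s1) = disclosed c1 (fst s1)" by (rule Inv_disc_eq[OF I1])
        then have "proj c1 s1 = proj c2 s2" using \<open>s1 = s2\<close> by (simp add: proj_def)
        then show False using bad expl_agree_refl by metis
      qed
    qed
  qed simp
  also have "\<dots> = emeasure (measure_pmf (map_pmf fst ?J)) {s. \<not> fst s \<subseteq> ?A}"
    by simp
  also have "\<dots> = emeasure (measure_pmf (expl_state K c1 n)) {s. \<not> fst s \<subseteq> ?A}"
    by (simp only: jstate_fst)
  finally show ?thesis .
qed

lemma jstep_cong:
  assumes "disclosed c1 (fst (fst ss)) = disclosed c1' (fst (fst ss))"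
      and "disclosed c2 (fst (snd ss)) = disclosed c2' (fst (snd ss))"
  shows "jstep K c1 c2 ss = jstep K c1' c2' ss"
proof -
  have e1: "expl_step K c1 (fst ss) = expl_step K c1' (fst ss)" by (rule step_cong) (use assms in simp)
  have e2: "expl_step K c2 (snd ss) = expl_step K c2' (snd ss)" by (rule step_cong) (use assms in simp)
  show ?thesis by (simp only: jstep_def e1 e2 assms)
qed

lemma jstate_local:
  assumes K: "exploration_rule K" and eq1: "\<forall>u\<in>Tn c1 n. c1' u = c1 u"
      and eq2: "\<forall>u\<in>Tn c2 n. c2' u = c2 u"
  shows "k \<le> Suc n \<Longrightarrow> jstate K c1' c2' k = jstate K c1 c2 k"
proof (induction k)
  case 0
  then show ?case by simp
next
  case (Suc k)
  then have IH: "jstate K c1' c2' k = jstate K c1 c2 k" by simp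
  have "jstate K c1' c2' (Suc k) = bind_pmf (jstate K c1 c2 k) (jstep K c1' c2')"
    by (simp add: IH)
  also have "\<dots> = bind_pmf (jstate K c1 c2 k) (jstep K c1 c2)"
  proof (rule bind_pmf_cong[OF refl])
    fix ss assume ss: "ss \<in> set_pmf (jstate K c1 c2 k)"
    have "Inv c1 k (fst ss)" using jstate_supp1[OF ss] state_support[OF K] by blast
    then have 1: "disclosed c1' (fst (fst ss)) = disclosed c1 (fst (fst ss))"
      using Inv_disc_eq_Tn[OF _ eq1] Suc.prems by simp
    have "Inv c2 k (snd ss)" using jstate_supp2[OF ss] state_support[OF K] by blast
    then have 2: "disclosed c2' (fst (snd ss)) = disclosed c2 (fst (snd ss))"
      using Inv_disc_eq_Tn[OF _ eq2] Suc.prems by simp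
    show "jstep K c1' c2' ss = jstep K c1 c2 ss" by (rule jstep_cong) (use 1 2 in auto)
  qed
  finally show ?case by simp
qed

lemma jexpl_local:
  assumes K: "exploration_rule K" and eq1: "\<forall>u\<in>Tn c1 n. c1' u = c1 u"
      and eq2: "\<forall>u\<in>Tn c2 n. c2' u = c2 u"
  shows "jexpl K c1' c2' n = jexpl K c1 c2 n"
  unfolding jexpl_def jstate_local[OF K eq1 eq2 le_SucI[OF order_refl]]
proof (rule map_pmf_cong[OF refl])
  fix ss assume ss: "ss \<in> set_pmf (jstate K c1 c2 n)"
  have "Inv c1 n (fst ss)" using jstate_supp1[OF ss] state_support[OF K] by blast
  then have 1: "disclosed c1' (fst (fst ss)) = disclosed c1 (fst (fst ss))"
    using Inv_disc_eq_Tn[OF _ eq1] by simp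
  have "Inv c2 n (snd ss)" using jstate_supp2[OF ss] state_support[OF K] by blast
  then have 2: "disclosed c2' (fst (snd ss)) = disclosed c2 (fst (snd ss))"
    using Inv_disc_eq_Tn[OF _ eq2] by simp
  show "(proj c1' (fst ss), proj c2' (snd ss)) = (proj c1 (fst ss), proj c2 (snd ss))"
    using 1 2 by (simp add: proj_def)
qed

lemma pmf_count_swap:
  "(\<integral>\<^sup>+ x. \<integral>\<^sup>+ y. f x y \<partial>count_space UNIV \<partial>measure_pmf p) =
   (\<integral>\<^sup>+ y. \<integral>\<^sup>+ x. f x y \<partial>measure_pmf p \<partial>count_space UNIV)"
proof -
  have "(\<integral>\<^sup>+ x. \<integral>\<^sup>+ y. f x y \<partial>count_space UNIV \<partial>measure_pmf p) =
        (\<integral>\<^sup>+ x. \<integral>\<^sup>+ y. ennreal (pmf p x) * f x y \<partial>count_space UNIV \<partial>count_space UNIV)"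
    by (simp add: nn_integral_measure_pmf nn_integral_cmult)
  also have "\<dots> = (\<integral>\<^sup>+ y. \<integral>\<^sup>+ x. ennreal (pmf p x) * f x y \<partial>count_space UNIV \<partial>count_space UNIV)"
    by (rule count_swap)
  also have "\<dots> = (\<integral>\<^sup>+ y. \<integral>\<^sup>+ x. f x y \<partial>measure_pmf p \<partial>count_space UNIV)"
    by (simp add: nn_integral_measure_pmf)
  finally show ?thesis .
qed

lemma count_M_swap:
  fixes f :: "'v::countable \<Rightarrow> 'x \<Rightarrow> ennreal"
  assumes M: "prob_space M" and f: "\<And>v. f v \<in> borel_measurable M"
  shows "(\<integral>\<^sup>+ x. \<integral>\<^sup>+ v. f v x \<partial>count_space UNIV \<partial>M) = (\<integral>\<^sup>+ v. \<integral>\<^sup>+ x. f v x \<partial>M \<partial>count_space UNIV)"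
proof -
  interpret M: prob_space M by fact
  interpret C: sigma_finite_measure "count_space (UNIV :: 'v set)"
    by (rule sigma_finite_measure_count_space)
  interpret pair_sigma_finite "count_space (UNIV :: 'v set)" M
    by unfold_locales
  have "case_prod f \<in> borel_measurable (count_space UNIV \<Otimes>\<^sub>M M)"
    by (rule measurable_pair_measure_countable1) (auto intro: f)
  then show ?thesis by (rule Fubini')
qed

lemma le_count_integral: "f u \<le> (\<integral>\<^sup>+ v. f v \<partial>count_space UNIV)"
proof -
  have "f u = (\<integral>\<^sup>+ v. f v * indicator {u} v \<partial>count_space UNIV)" by simp
  also have "\<dots> \<le> (\<integral>\<^sup>+ v. f v \<partial>count_space UNIV)"
    by (rule nn_integral_mono) (simp split: split_indicator)
  finally show ?thesis .
qed

definition gv :: "(expl \<Rightarrow> nat list option pmf) \<Rightarrow> (nat list \<Rightarrow> nat) \<Rightarrow> nat list \<Rightarrow> nat \<Rightarrow> ennreal" where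
  "gv K c v k = (\<integral>\<^sup>+ s. indicator {s. v \<notin> fst s} s * emeasure (measure_pmf (expl_step K c s)) {s'. v \<in> fst s'}
                  \<partial>measure_pmf (expl_state K c k))"

lemma bad_bound:
  "emeasure (measure_pmf (expl_state K c n)) {s. \<not> fst s \<subseteq> A}
     \<le> indicator (- A) [] + (\<Sum>k<n. \<integral>\<^sup>+ v. indicator (- A) v * gv K c v k \<partial>count_space UNIV)"
proof (induction n)
  case 0
  then show ?case by (simp add: indicator_def)
next
  case (Suc n)
  let ?E = "{s. \<not> fst s \<subseteq> A}"
  let ?T = "\<lambda>s s'. \<integral>\<^sup>+ v. indicator (- A) v * (indicator {s. v \<notin> fst s} s * indicator {s'. v \<in> fst s'} s') \<partial>count_space UNIV"
  have pw: "emeasure (measure_pmf (expl_step K c s)) ?E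
        \<le> indicator ?E s + (\<integral>\<^sup>+ v. indicator (- A) v * (indicator {s. v \<notin> fst s} s * emeasure (measure_pmf (expl_step K c s)) {s'. v \<in> fst s'}) \<partial>count_space UNIV)"
    for s
  proof -
    have ptw: "indicator ?E s' \<le> indicator ?E s + ?T s s'" for s'
    proof (cases "s' \<in> ?E")
      case True
      then obtain u where u: "u \<in> fst s'" "u \<notin> A" by auto
      show ?thesis
      proof (cases "s \<in> ?E")
        case True
        then have "indicator ?E s = (1::ennreal)" by simp
        moreover have "indicator ?E s' \<le> (1::ennreal)" by (simp add: indicator_def)
        ultimately show ?thesis by (simp add: add_increasing2)
      next
        case False
        then have "u \<notin> fst s" using u by auto
        then have "1 \<le> ?T s s'"
          using le_count_integral[of "\<lambda>v. indicator (- A) v * (indicator {s. v \<notin> fst s} s * indicator {s'. v \<in> fst s'} s')" u]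
          using u by simp
        then show ?thesis using True False by simp
      qed
    qed simp
    have "emeasure (measure_pmf (expl_step K c s)) ?E = (\<integral>\<^sup>+ s'. indicator ?E s' \<partial>measure_pmf (expl_step K c s))"
      by simp
    also have "\<dots> \<le> (\<integral>\<^sup>+ s'. indicator ?E s + ?T s s' \<partial>measure_pmf (expl_step K c s))"
      by (rule nn_integral_mono) (rule ptw)
    also have "\<dots> = indicator ?E s + (\<integral>\<^sup>+ s'. ?T s s' \<partial>measure_pmf (expl_step K c s))"
      by (subst nn_integral_add) (auto simp: measure_pmf.emeasure_space_1)
    also have "(\<integral>\<^sup>+ s'. ?T s s' \<partial>measure_pmf (expl_step K c s))
       = (\<integral>\<^sup>+ v. indicator (- A) v * (indicator {s. v \<notin> fst s} s * emeasure (measure_pmf (expl_step K c s)) {s'. v \<in> fst s'}) \<partial>count_space UNIV)"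
      by (subst pmf_count_swap) (simp add: nn_integral_cmult)
    finally show ?thesis .
  qed
  have "emeasure (measure_pmf (expl_state K c (Suc n))) ?E
       = (\<integral>\<^sup>+ s. emeasure (measure_pmf (expl_step K c s)) ?E \<partial>measure_pmf (expl_state K c n))"
    by simp
  also have "\<dots> \<le> (\<integral>\<^sup>+ s. indicator ?E s + (\<integral>\<^sup>+ v. indicator (- A) v * (indicator {s. v \<notin> fst s} s * emeasure (measure_pmf (expl_step K c s)) {s'. v \<in> fst s'}) \<partial>count_space UNIV) \<partial>measure_pmf (expl_state K c n))"
    by (rule nn_integral_mono) (rule pw)
  also have "\<dots> = emeasure (measure_pmf (expl_state K c n)) ?E +
     (\<integral>\<^sup>+ s. (\<integral>\<^sup>+ v. indicator (- A) v * (indicator {s. v \<notin> fst s} s * emeasure (measure_pmf (expl_step K c s)) {s'. v \<in> fst s'}) \<partial>count_space UNIV) \<partial>measure_pmf (expl_state K c n))"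
    by (subst nn_integral_add) auto
  also have "(\<integral>\<^sup>+ s. (\<integral>\<^sup>+ v. indicator (- A) v * (indicator {s. v \<notin> fst s} s * emeasure (measure_pmf (expl_step K c s)) {s'. v \<in> fst s'}) \<partial>count_space UNIV) \<partial>measure_pmf (expl_state K c n))
     = (\<integral>\<^sup>+ v. indicator (- A) v * gv K c v n \<partial>count_space UNIV)"
    by (subst pmf_count_swap) (simp add: nn_integral_cmult gv_def)
  finally have "emeasure (measure_pmf (expl_state K c (Suc n))) ?E
     \<le> emeasure (measure_pmf (expl_state K c n)) ?E + (\<integral>\<^sup>+ v. indicator (- A) v * gv K c v n \<partial>count_space UNIV)" .
  also have "\<dots> \<le> indicator (- A) [] + (\<Sum>k<n. \<integral>\<^sup>+ v. indicator (- A) v * gv K c v k \<partial>count_space UNIV)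
                  + (\<integral>\<^sup>+ v. indicator (- A) v * gv K c v n \<partial>count_space UNIV)"
    by (rule add_right_mono) (rule Suc.IH)
  finally show ?case by (simp add: add.assoc)
qed

lemma gv_sum:
  assumes K: "exploration_rule K"
  shows "(\<integral>\<^sup>+ v. gv K c v k \<partial>count_space UNIV) \<le> 1"
proof -
  have inner: "(\<integral>\<^sup>+ v. indicator {s. v \<notin> fst s} s * emeasure (measure_pmf (expl_step K c s)) {s'. v \<in> fst s'} \<partial>count_space UNIV) \<le> 1"
    if s: "s \<in> set_pmf (expl_state K c k)" for s
  proof -
    have I: "Inv c k s" using s state_support[OF K] by blast
    have "(\<integral>\<^sup>+ v. indicator {s. v \<notin> fst s} s * emeasure (measure_pmf (expl_step K c s)) {s'. v \<in> fst s'} \<partial>count_space UNIV)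
        = (\<integral>\<^sup>+ v. \<integral>\<^sup>+ s'. indicator (fst s' - fst s) v \<partial>measure_pmf (expl_step K c s) \<partial>count_space UNIV)"
    proof (rule nn_integral_cong)
      fix v
      show "indicator {s. v \<notin> fst s} s * emeasure (measure_pmf (expl_step K c s)) {s'. v \<in> fst s'}
           = (\<integral>\<^sup>+ s'. indicator (fst s' - fst s) v \<partial>measure_pmf (expl_step K c s))"
      proof (cases "v \<in> fst s")
        case True
        then show ?thesis by (simp add: indicator_def)
      next
        case False
        have "(\<integral>\<^sup>+ s'. indicator (fst s' - fst s) v \<partial>measure_pmf (expl_step K c s))
            = (\<integral>\<^sup>+ s'. indicator {s'. v \<in> fst s'} s' \<partial>measure_pmf (expl_step K c s))"
          by (rule nn_integral_cong) (use False in \<open>simp add: indicator_def\<close>)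
        then show ?thesis using False by simp
      qed
    qed
    also have "\<dots> = (\<integral>\<^sup>+ s'. \<integral>\<^sup>+ v. indicator (fst s' - fst s) v \<partial>count_space UNIV \<partial>measure_pmf (expl_step K c s))"
      by (rule pmf_count_swap[symmetric])
    also have "\<dots> \<le> (\<integral>\<^sup>+ s'. 1 \<partial>measure_pmf (expl_step K c s))"
    proof (rule nn_integral_mono_AE, rule AE_pmfI)
      fix s' assume s': "s' \<in> set_pmf (expl_step K c s)"
      then obtain w where w: "fst s' \<subseteq> insert w (fst s)" using step_support[OF K I] by blast
      have "(\<integral>\<^sup>+ v. indicator (fst s' - fst s) v \<partial>count_space UNIV) = emeasure (count_space UNIV) (fst s' - fst s)"
        by simp
      also have "\<dots> \<le> emeasure (count_space UNIV) {w}"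
        by (rule emeasure_mono) (use w in auto)
      also have "\<dots> = 1" by simp
      finally show "(\<integral>\<^sup>+ v. indicator (fst s' - fst s) v \<partial>count_space UNIV) \<le> 1" .
    qed
    also have "\<dots> = 1" by (simp add: measure_pmf.emeasure_space_1)
    finally show ?thesis .
  qed
  have "(\<integral>\<^sup>+ v. gv K c v k \<partial>count_space UNIV)
      = (\<integral>\<^sup>+ s. \<integral>\<^sup>+ v. indicator {s. v \<notin> fst s} s * emeasure (measure_pmf (expl_step K c s)) {s'. v \<in> fst s'} \<partial>count_space UNIV \<partial>measure_pmf (expl_state K c k))"
    unfolding gv_def by (rule pmf_count_swap[symmetric])
  also have "\<dots> \<le> (\<integral>\<^sup>+ s. 1 \<partial>measure_pmf (expl_state K c k))"
    by (rule nn_integral_mono_AE, rule AE_pmfI) (rule inner)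
  also have "\<dots> = 1" by (simp add: measure_pmf.emeasure_space_1)
  finally show ?thesis .
qed

lemma gv_root:
  assumes K: "exploration_rule K"
  shows "gv K c [] k = 0"
proof -
  have "gv K c [] k = (\<integral>\<^sup>+ s. 0 \<partial>measure_pmf (expl_state K c k))"
    unfolding gv_def
  proof (rule nn_integral_cong_AE, rule AE_pmfI)
    fix s assume "s \<in> set_pmf (expl_state K c k)"
    then have "[] \<in> fst s" using state_support[OF K] by (auto simp: Inv_def)
    then show "indicator {s. [] \<notin> fst s} s * emeasure (measure_pmf (expl_step K c s)) {s'. [] \<in> fst s'} = 0"
      by simp
  qed
  then show ?thesis by simp
qed

lemma state_pmf_indep:
  assumes K: "exploration_rule K" and eq: "\<And>u. u \<noteq> v \<Longrightarrow> c' u = c u"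
  shows "v \<notin> fst s \<Longrightarrow> pmf (expl_state K c' k) s = pmf (expl_state K c k) s"
proof (induction k arbitrary: s)
  case 0
  then show ?case by simp
next
  case (Suc k)
  have pw: "ennreal (pmf (expl_state K c' k) t) * ennreal (pmf (expl_step K c' t) s)
          = ennreal (pmf (expl_state K c k) t) * ennreal (pmf (expl_step K c t) s)" for t
  proof (cases "v \<in> fst t")
    case True
    have "s \<notin> set_pmf (expl_step K c' t)" "s \<notin> set_pmf (expl_step K c t)"
      using step_mono[of s K c' t] step_mono[of s K c t] True Suc.prems by auto
    then show ?thesis by (simp add: set_pmf_iff)
  next
    case False
    then have p: "pmf (expl_state K c' k) t = pmf (expl_state K c k) t" by (rule Suc.IH)
    show ?thesis
    proof (cases "t \<in> set_pmf (expl_state K c k)")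
      case True
      then have I: "Inv c k t" using state_support[OF K] by blast
      have "\<forall>u\<in>fst t. c' u = c u" using False eq by metis
      then have "disclosed c' (fst t) = disclosed c (fst t)" by (rule Inv_disc_eq[OF I])
      then have "expl_step K c' t = expl_step K c t" by (rule step_cong)
      then show ?thesis using p by simp
    next
      case False
      then show ?thesis using p by (simp add: set_pmf_iff)
    qed
  qed
  have "ennreal (pmf (expl_state K c' (Suc k)) s)
      = (\<integral>\<^sup>+ t. ennreal (pmf (expl_state K c' k) t) * ennreal (pmf (expl_step K c' t) s) \<partial>count_space UNIV)"
    by (simp add: ennreal_pmf_bind nn_integral_measure_pmf)
  also have "\<dots> = (\<integral>\<^sup>+ t. ennreal (pmf (expl_state K c k) t) * ennreal (pmf (expl_step K c t) s) \<partial>count_space UNIV)"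
    by (simp add: pw)
  also have "\<dots> = ennreal (pmf (expl_state K c (Suc k)) s)"
    by (simp add: ennreal_pmf_bind nn_integral_measure_pmf)
  finally show ?case by simp
qed

lemma gv_indep:
  assumes K: "exploration_rule K" and eq: "\<And>u. u \<noteq> v \<Longrightarrow> c' u = c u"
  shows "gv K c' v k = gv K c v k"
proof -
  have "ennreal (pmf (expl_state K c' k) s) * (indicator {s. v \<notin> fst s} s * emeasure (measure_pmf (expl_step K c' s)) {s'. v \<in> fst s'})
      = ennreal (pmf (expl_state K c k) s) * (indicator {s. v \<notin> fst s} s * emeasure (measure_pmf (expl_step K c s)) {s'. v \<in> fst s'})" for s
  proof (cases "v \<in> fst s")
    case False
    have p: "pmf (expl_state K c' k) s = pmf (expl_state K c k) s" using state_pmf_indep[OF K eq False] .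
    show ?thesis
    proof (cases "s \<in> set_pmf (expl_state K c k)")
      case True
      then have I: "Inv c k s" using state_support[OF K] by blast
      have "\<forall>u\<in>fst s. c' u = c u" using False eq by metis
      then have "disclosed c' (fst s) = disclosed c (fst s)" by (rule Inv_disc_eq[OF I])
      then have "expl_step K c' s = expl_step K c s" by (rule step_cong)
      then show ?thesis using p by simp
    next
      case False
      then show ?thesis using p by (simp add: set_pmf_iff)
    qed
  qed simp
  then show ?thesis unfolding gv_def nn_integral_measure_pmf by simp
qed

lemma gv_local:
  assumes K: "exploration_rule K" and eq: "\<forall>u\<in>Tn c n. c' u = c u" and kn: "k \<le> n"
  shows "gv K c' v k = gv K c v k"
proof -
  have st: "expl_state K c' k = expl_state K c k" using expl_state_local[OF K eq] kn by simp
  show ?thesis unfolding gv_def st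
  proof (rule nn_integral_cong_AE, rule AE_pmfI)
    fix s assume "s \<in> set_pmf (expl_state K c k)"
    then have "Inv c k s" using state_support[OF K] by blast
    then have "disclosed c' (fst s) = disclosed c (fst s)" using Inv_disc_eq_Tn[OF _ eq kn] by simp
    then have "expl_step K c' s = expl_step K c s" by (rule step_cong)
    then show "indicator {s. v \<notin> fst s} s * emeasure (measure_pmf (expl_step K c' s)) {s'. v \<in> fst s'} =
               indicator {s. v \<notin> fst s} s * emeasure (measure_pmf (expl_step K c s)) {s'. v \<in> fst s'}" by simp
  qed
qed

lemma measurable_count_integral:
  fixes f :: "'v::countable \<Rightarrow> 'x \<Rightarrow> ennreal"
  assumes f: "\<And>v. f v \<in> borel_measurable M"
  shows "(\<lambda>x. \<integral>\<^sup>+ v. f v x \<partial>count_space UNIV) \<in> borel_measurable M"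
proof -
  interpret C: sigma_finite_measure "count_space (UNIV :: 'v set)"
    by (rule sigma_finite_measure_count_space)
  have "(\<lambda>(v, x). f v x) \<in> borel_measurable (count_space UNIV \<Otimes>\<^sub>M M)"
    by (rule measurable_pair_measure_countable1) (auto intro: f)
  then have "(\<lambda>(x, v). f v x) \<in> borel_measurable (M \<Otimes>\<^sub>M count_space UNIV)"
    by (subst measurable_pair_swap_iff) simp
  from C.borel_measurable_nn_integral_fst[OF this] show ?thesis by simp
qed

lemma main_integral_bound:
  fixes Cp :: "nat list \<Rightarrow> (nat \<times> nat) pmf"
  assumes K: "exploration_rule K"
    and root: "emeasure (measure_pmf (Cp [])) {z. fst z \<noteq> snd z} \<le> ennreal d0"
    and other: "\<And>v. v \<noteq> [] \<Longrightarrow> emeasure (measure_pmf (Cp v)) {z. fst z \<noteq> snd z} \<le> ennreal d1"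
  shows "(\<integral>\<^sup>+ c. emeasure (measure_pmf (expl_state K (\<lambda>u. fst (c u)) l)) {s. \<not> fst s \<subseteq> {u. fst (c u) = snd (c u)}}
           \<partial>PiM UNIV (\<lambda>v. measure_pmf (Cp v))) \<le> ennreal d0 + of_nat l * ennreal d1"
proof -
  let ?\<nu> = "PiM UNIV (\<lambda>v. measure_pmf (Cp v))"
  let ?neq = "{z :: nat \<times> nat. fst z \<noteq> snd z}"
  let ?G = "\<lambda>v k c. gv K (\<lambda>u. fst (c u)) v k"
  let ?h = "\<lambda>v c. indicator ?neq (c v) :: ennreal"
  interpret \<nu>: prob_space ?\<nu>
    by (intro prob_space_PiM) (simp add: measure_pmf.prob_space_axioms)
  have setsCp: "\<And>i. sets (measure_pmf (Cp i)) = UNIV" by simp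
  have mG: "?G v k \<in> borel_measurable ?\<nu>" for v k
  proof (rule local_borel_measurable[OF setsCp])
    fix c :: "nat list \<Rightarrow> nat \<times> nat"
    show "\<exists>F. finite F \<and> (\<forall>c'. (\<forall>i\<in>F. c' i = c i) \<longrightarrow> ?G v k c' = ?G v k c)"
    proof (intro exI conjI allI impI)
      show "finite (Tn (\<lambda>u. fst (c u)) k)" by (rule finite_tree_depth)
      fix c' assume "\<forall>i\<in>Tn (\<lambda>u. fst (c u)) k. c' i = c i"
      then have "\<forall>u\<in>Tn (\<lambda>u. fst (c u)) k. fst (c' u) = fst (c u)" by simp
      then show "?G v k c' = ?G v k c" by (rule gv_local[OF K _ order_refl])
    qed
  qed
  have mh: "?h v \<in> borel_measurable ?\<nu>" for v
    by (rule measurable_compose[OF measurable_component_singleton[of v UNIV]]) simp_all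
  have mS: "(\<lambda>c. \<integral>\<^sup>+ v. ?h v c * ?G v k c \<partial>count_space UNIV) \<in> borel_measurable ?\<nu>" for k
    by (rule measurable_count_integral) (intro borel_measurable_times_ennreal mh mG)
  have B: "emeasure (measure_pmf (expl_state K (\<lambda>u. fst (c u)) l)) {s. \<not> fst s \<subseteq> {u. fst (c u) = snd (c u)}}
        \<le> ?h [] c + (\<Sum>k<l. \<integral>\<^sup>+ v. ?h v c * ?G v k c \<partial>count_space UNIV)" for c
  proof -
    have e: "indicator (- {u. fst (c u) = snd (c u)}) v = ?h v c" for v
      by (simp add: indicator_def)
    show ?thesis using bad_bound[of K "\<lambda>u. fst (c u)" l "{u. fst (c u) = snd (c u)}"] by (simp only: e)
  qed
  have indep: "(\<integral>\<^sup>+ c. ?G v k c * ?h v c \<partial>?\<nu>) = (\<integral>\<^sup>+ c. ?G v k c \<partial>?\<nu>) * emeasure (measure_pmf (Cp v)) ?neq" for v k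
  proof -
    have "(\<integral>\<^sup>+ c. ?G v k c * ?h v c \<partial>?\<nu>) = (\<integral>\<^sup>+ c. ?G v k c \<partial>?\<nu>) * (\<integral>\<^sup>+ z. indicator ?neq z \<partial>measure_pmf (Cp v))"
    proof (rule PiM_indep[OF mG])
      fix c :: "nat list \<Rightarrow> nat \<times> nat" and x
      show "?G v k (c(v := x)) = ?G v k c"
        by (rule gv_indep[OF K]) simp
    qed
    then show ?thesis by simp
  qed
  have root': "(\<integral>\<^sup>+ c. ?h [] c \<partial>?\<nu>) \<le> ennreal d0"
  proof -
    have "(\<integral>\<^sup>+ c. (\<lambda>_. 1) c * ?h [] c \<partial>?\<nu>) = (\<integral>\<^sup>+ c. (\<lambda>_. 1) c \<partial>?\<nu>) * (\<integral>\<^sup>+ z. indicator ?neq z \<partial>measure_pmf (Cp []))"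
      by (rule PiM_indep) simp_all
    then have "(\<integral>\<^sup>+ c. ?h [] c \<partial>?\<nu>) = emeasure (measure_pmf (Cp [])) ?neq"
      by (simp add: \<nu>.emeasure_space_1)
    then show ?thesis using root by simp
  qed
  have step: "(\<integral>\<^sup>+ c. (\<integral>\<^sup>+ v. ?h v c * ?G v k c \<partial>count_space UNIV) \<partial>?\<nu>) \<le> ennreal d1" for k
  proof -
    have "(\<integral>\<^sup>+ c. (\<integral>\<^sup>+ v. ?h v c * ?G v k c \<partial>count_space UNIV) \<partial>?\<nu>)
        = (\<integral>\<^sup>+ v. (\<integral>\<^sup>+ c. ?G v k c * ?h v c \<partial>?\<nu>) \<partial>count_space UNIV)"
      by (subst count_M_swap[OF \<nu>.prob_space_axioms])
         (auto intro!: borel_measurable_times_ennreal mh mG simp: mult.commute)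
    also have "\<dots> \<le> (\<integral>\<^sup>+ v. (\<integral>\<^sup>+ c. ?G v k c \<partial>?\<nu>) * ennreal d1 \<partial>count_space UNIV)"
    proof (rule nn_integral_mono)
      fix v
      show "(\<integral>\<^sup>+ c. ?G v k c * ?h v c \<partial>?\<nu>) \<le> (\<integral>\<^sup>+ c. ?G v k c \<partial>?\<nu>) * ennreal d1"
      proof (cases "v = []")
        case True
        then show ?thesis by (simp add: gv_root[OF K])
      next
        case False
        then show ?thesis unfolding indep by (intro mult_left_mono other) auto
      qed
    qed
    also have "\<dots> = (\<integral>\<^sup>+ v. (\<integral>\<^sup>+ c. ?G v k c \<partial>?\<nu>) \<partial>count_space UNIV) * ennreal d1"
      by (rule nn_integral_multc) simp
    also have "\<dots> \<le> 1 * ennreal d1"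
    proof (rule mult_right_mono)
      have "(\<integral>\<^sup>+ v. (\<integral>\<^sup>+ c. ?G v k c \<partial>?\<nu>) \<partial>count_space UNIV) = (\<integral>\<^sup>+ c. (\<integral>\<^sup>+ v. ?G v k c \<partial>count_space UNIV) \<partial>?\<nu>)"
        by (subst count_M_swap[OF \<nu>.prob_space_axioms]) (auto intro: mG)
      also have "\<dots> \<le> (\<integral>\<^sup>+ c. 1 \<partial>?\<nu>)"
        by (rule nn_integral_mono) (rule gv_sum[OF K])
      also have "\<dots> = 1" by (simp add: \<nu>.emeasure_space_1)
      finally show "(\<integral>\<^sup>+ v. (\<integral>\<^sup>+ c. ?G v k c \<partial>?\<nu>) \<partial>count_space UNIV) \<le> 1" .
    qed simp
    finally show ?thesis by simp
  qed
  have "(\<integral>\<^sup>+ c. emeasure (measure_pmf (expl_state K (\<lambda>u. fst (c u)) l)) {s. \<not> fst s \<subseteq> {u. fst (c u) = snd (c u)}} \<partial>?\<nu>)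
       \<le> (\<integral>\<^sup>+ c. ?h [] c + (\<Sum>k<l. \<integral>\<^sup>+ v. ?h v c * ?G v k c \<partial>count_space UNIV) \<partial>?\<nu>)"
    by (rule nn_integral_mono) (rule B)
  also have "\<dots> = (\<integral>\<^sup>+ c. ?h [] c \<partial>?\<nu>) + (\<Sum>k<l. \<integral>\<^sup>+ c. (\<integral>\<^sup>+ v. ?h v c * ?G v k c \<partial>count_space UNIV) \<partial>?\<nu>)"
    by (subst nn_integral_add) (auto intro!: mh borel_measurable_sum mS nn_integral_sum)
  also have "\<dots> \<le> ennreal d0 + (\<Sum>k<l. ennreal d1)"
    by (intro add_mono root' sum_mono step)
  also have "\<dots> = ennreal d0 + of_nat l * ennreal d1" by simp
  finally show ?thesis .
qed

lemma coupling_shift: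
  fixes C1 :: "(nat \<times> nat) pmf"
  assumes "map_pmf fst C1 = p" "map_pmf snd C1 = q"
    "measure_pmf.prob C1 {z. fst z \<noteq> snd z} \<le> d"
  shows "map_pmf fst (map_pmf (\<lambda>z. (fst z - 1, snd z - 1)) C1) = map_pmf (\<lambda>k. k - 1) p"
    "map_pmf snd (map_pmf (\<lambda>z. (fst z - 1, snd z - 1)) C1) = map_pmf (\<lambda>k. k - 1) q"
    "measure_pmf.prob (map_pmf (\<lambda>z. (fst z - 1, snd z - 1)) C1) {z. fst z \<noteq> snd z} \<le> d"
proof -
  show "map_pmf fst (map_pmf (\<lambda>z. (fst z - 1, snd z - 1)) C1) = map_pmf (\<lambda>k. k - 1) p"
    using assms(1) by (auto simp: pmf.map_comp o_def)
  show "map_pmf snd (map_pmf (\<lambda>z. (fst z - 1, snd z - 1)) C1) = map_pmf (\<lambda>k. k - 1) q"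
    using assms(2) by (auto simp: pmf.map_comp o_def)
  have "measure_pmf.prob (map_pmf (\<lambda>z. (fst z - 1, snd z - 1)) C1) {z. fst z \<noteq> snd z}
      = measure_pmf.prob C1 ((\<lambda>z. (fst z - 1, snd z - 1)) -` {z. fst z \<noteq> snd z})"
    by (simp add: measure_map_pmf)
  also have "\<dots> \<le> measure_pmf.prob C1 {z. fst z \<noteq> snd z}"
    by (rule measure_pmf.finite_measure_mono) auto
  finally show "measure_pmf.prob (map_pmf (\<lambda>z. (fst z - 1, snd z - 1)) C1) {z. fst z \<noteq> snd z} \<le> d"
    using assms(3) by simp
qed

lemma component_map_measurable:
  fixes Cp :: "'i \<Rightarrow> 'a pmf" and g :: "'a \<Rightarrow> 'b"
  shows "(\<lambda>c v. g (c v)) \<in> measurable (PiM UNIV (\<lambda>v. measure_pmf (Cp v))) (PiM UNIV (\<lambda>v. measure_pmf (map_pmf g (Cp v))))"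
  by (rule measurable_PiM_single') (auto simp: space_PiM intro!: measurable_compose[OF measurable_component_singleton])

lemma bind_marginal:
  fixes Cp :: "nat list \<Rightarrow> (nat \<times> nat) pmf" and g :: "nat \<times> nat \<Rightarrow> nat"
  assumes K: "exploration_rule K"
    and N: "N \<in> measurable (PiM UNIV (\<lambda>v. measure_pmf (Cp v))) (subprob_algebra (count_space UNIV))"
    and Nd: "\<And>c. distr (N c) (count_space UNIV) h = measure_pmf (exploration K (\<lambda>u. g (c u)) l)"
    and G: "GWP D Ds = PiM UNIV (\<lambda>v. measure_pmf (map_pmf g (Cp v)))"
  shows "distr (PiM UNIV (\<lambda>v. measure_pmf (Cp v)) \<bind> N) (count_space UNIV) h = expl_law K D Ds l"
proof -
  let ?\<nu> = "PiM UNIV (\<lambda>v. measure_pmf (Cp v))"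
  have sp: "space ?\<nu> \<noteq> {}" by (simp add: space_PiM)
  have "distr (?\<nu> \<bind> N) (count_space UNIV) h = ?\<nu> \<bind> (\<lambda>c. distr (N c) (count_space UNIV) h)"
    by (rule distr_bind[OF N sp]) simp
  also have "\<dots> = ?\<nu> \<bind> (\<lambda>c. measure_pmf (exploration K (\<lambda>u. g (c u)) l))"
    by (simp add: Nd)
  also have "\<dots> = distr ?\<nu> (GWP D Ds) (\<lambda>c v. g (c v)) \<bind> (\<lambda>c1. measure_pmf (exploration K c1 l))"
  proof (rule bind_distr[symmetric])
    show "(\<lambda>c v. g (c v)) \<in> measurable ?\<nu> (GWP D Ds)"
      unfolding G by (rule component_map_measurable)
    show "(\<lambda>c1. measure_pmf (exploration K c1 l)) \<in> measurable (GWP D Ds) (subprob_algebra (count_space UNIV))"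
      by (rule exploration_kernel_measurable[OF K])
  qed (rule sp)
  also have "distr ?\<nu> (GWP D Ds) (\<lambda>c v. g (c v)) = GWP D Ds"
    unfolding G by (rule PiM_marginal)
  finally show ?thesis by (simp add: expl_law_def)
qed

theorem lemmaA2:
  fixes D1 D2 D1s D2s :: "nat pmf" and l :: nat and K :: "expl \<Rightarrow> nat list option pmf"
  assumes "0 \<notin> set_pmf D1s" and "0 \<notin> set_pmf D2s"
    and "l \<ge> 1"
    and "exploration_rule K"
  shows "\<exists>\<mu> :: (expl \<times> expl) measure.
           prob_space \<mu> \<and> sets \<mu> = sets (count_space UNIV)
         \<and> distr \<mu> (count_space UNIV) fst = expl_law K D1 D1s l
         \<and> distr \<mu> (count_space UNIV) snd = expl_law K D2 D2s l
         \<and> measure \<mu> {(X, Y). expl_agree X Y}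
             \<ge> 1 - dTV D1 D2 - real l * dTV D1s D2s"
proof -
  note K = assms(4)
  let ?neq = "{z :: nat \<times> nat. fst z \<noteq> snd z}"
  obtain C0 where C0: "map_pmf fst C0 = D1" "map_pmf snd C0 = D2" "measure_pmf.prob C0 ?neq \<le> dTV D1 D2"
    using optimal_coupling[of D1 D2] by blast
  obtain C1 where C1: "map_pmf fst C1 = D1s" "map_pmf snd C1 = D2s" "measure_pmf.prob C1 ?neq \<le> dTV D1s D2s"
    using optimal_coupling[of D1s D2s] by blast
  define Cs where "Cs = map_pmf (\<lambda>z. (fst z - 1, snd z - 1)) C1"
  note Cs = coupling_shift[OF C1, folded Cs_def]
  define Cp where "Cp v = (if v = [] then C0 else Cs)" for v :: "nat list"
  let ?\<nu> = "PiM UNIV (\<lambda>v. measure_pmf (Cp v))"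
  interpret \<nu>: prob_space ?\<nu>
    by (intro prob_space_PiM) (simp add: measure_pmf.prob_space_axioms)
  have sp: "space ?\<nu> \<noteq> {}" by (simp add: space_PiM)
  have G1: "GWP D1 D1s = PiM UNIV (\<lambda>v. measure_pmf (map_pmf fst (Cp v)))"
  proof -
    have "(\<lambda>v. if v = [] then measure_pmf D1 else measure_pmf (map_pmf (\<lambda>k. k - 1) D1s))
          = (\<lambda>v. measure_pmf (map_pmf fst (Cp v)))"
      by (auto simp: fun_eq_iff Cp_def C0 Cs)
    then show ?thesis unfolding GWP_def by simp
  qed
  have G2: "GWP D2 D2s = PiM UNIV (\<lambda>v. measure_pmf (map_pmf snd (Cp v)))"
  proof -
    have "(\<lambda>v. if v = [] then measure_pmf D2 else measure_pmf (map_pmf (\<lambda>k. k - 1) D2s))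
          = (\<lambda>v. measure_pmf (map_pmf snd (Cp v)))"
      by (auto simp: fun_eq_iff Cp_def C0 Cs)
    then show ?thesis unfolding GWP_def by simp
  qed
  define N where "N c = measure_pmf (jexpl K (\<lambda>u. fst (c u)) (\<lambda>u. snd (c u)) l)" for c :: "nat list \<Rightarrow> nat \<times> nat"
  have Nm: "N \<in> measurable ?\<nu> (subprob_algebra (count_space UNIV))"
    unfolding N_def
  proof (rule local_kernel_measurable)
    fix i show "sets (measure_pmf (Cp i)) = UNIV" by simp
  next
    fix c :: "nat list \<Rightarrow> nat \<times> nat"
    show "\<exists>F. finite F \<and> (\<forall>c'. (\<forall>i\<in>F. c' i = c i) \<longrightarrow>
             jexpl K (\<lambda>u. fst (c' u)) (\<lambda>u. snd (c' u)) l = jexpl K (\<lambda>u. fst (c u)) (\<lambda>u. snd (c u)) l)"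
    proof (intro exI conjI allI impI)
      show "finite (Tn (\<lambda>u. fst (c u)) l \<union> Tn (\<lambda>u. snd (c u)) l)"
        using finite_tree_depth by blast
      fix c' assume h: "\<forall>i\<in>Tn (\<lambda>u. fst (c u)) l \<union> Tn (\<lambda>u. snd (c u)) l. c' i = c i"
      then have e1: "\<forall>u\<in>Tn (\<lambda>u. fst (c u)) l. fst (c' u) = fst (c u)" by simp
      from h have e2: "\<forall>u\<in>Tn (\<lambda>u. snd (c u)) l. snd (c' u) = snd (c u)" by simp
      show "jexpl K (\<lambda>u. fst (c' u)) (\<lambda>u. snd (c' u)) l = jexpl K (\<lambda>u. fst (c u)) (\<lambda>u. snd (c u)) l"
        by (rule jexpl_local[OF K e1 e2])
    qed
  qed
  define \<mu> where "\<mu> = ?\<nu> \<bind> N"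
  have sets\<mu>: "sets \<mu> = sets (count_space UNIV)"
    unfolding \<mu>_def by (rule sets_bind[OF _ sp]) (simp add: N_def)
  have prob\<mu>: "prob_space \<mu>"
    unfolding \<mu>_def
    by (rule \<nu>.prob_space_bind[OF _ Nm]) (simp add: N_def measure_pmf.prob_space_axioms)
  interpret \<mu>: prob_space \<mu> by (rule prob\<mu>)
  have d1: "distr \<mu> (count_space UNIV) fst = expl_law K D1 D1s l"
    unfolding \<mu>_def
  proof (rule bind_marginal[OF K Nm _ G1])
    fix c show "distr (N c) (count_space UNIV) fst = measure_pmf (exploration K (\<lambda>u. fst (c u)) l)"
      by (simp add: N_def map_pmf_rep_eq[symmetric] jexpl_fst)
  qed
  have d2: "distr \<mu> (count_space UNIV) snd = expl_law K D2 D2s l"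
    unfolding \<mu>_def
  proof (rule bind_marginal[OF K Nm _ G2])
    fix c show "distr (N c) (count_space UNIV) snd = measure_pmf (exploration K (\<lambda>u. snd (c u)) l)"
      by (simp add: N_def map_pmf_rep_eq[symmetric] jexpl_snd)
  qed
  let ?bad = "{p :: expl \<times> expl. \<not> expl_agree (fst p) (snd p)}"
  have dn0: "0 \<le> dTV D1 D2" "0 \<le> dTV D1s D2s" by (simp_all add: dTV_nonneg)
  have root: "emeasure (measure_pmf (Cp [])) ?neq \<le> ennreal (dTV D1 D2)"
    using C0(3) by (simp add: Cp_def measure_pmf.emeasure_eq_measure ennreal_leI)
  have other: "emeasure (measure_pmf (Cp v)) ?neq \<le> ennreal (dTV D1s D2s)" if "v \<noteq> []" for v
    using Cs(3) that by (simp add: Cp_def measure_pmf.emeasure_eq_measure ennreal_leI)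
  have "emeasure \<mu> ?bad = (\<integral>\<^sup>+ c. emeasure (N c) ?bad \<partial>?\<nu>)"
    unfolding \<mu>_def by (rule emeasure_bind[OF sp Nm]) simp
  also have "\<dots> \<le> (\<integral>\<^sup>+ c. emeasure (measure_pmf (expl_state K (\<lambda>u. fst (c u)) l)) {s. \<not> fst s \<subseteq> {u. fst (c u) = snd (c u)}} \<partial>?\<nu>)"
    by (rule nn_integral_mono) (unfold N_def, rule jexpl_bad[OF K])
  also have "\<dots> \<le> ennreal (dTV D1 D2) + of_nat l * ennreal (dTV D1s D2s)"
    by (rule main_integral_bound[where Cp=Cp, OF K root other])
  also have "\<dots> = ennreal (dTV D1 D2 + real l * dTV D1s D2s)"
    using dn0 by (simp add: ennreal_plus ennreal_mult ennreal_of_nat_eq_real_of_nat)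
  finally have "ennreal (measure \<mu> ?bad) \<le> ennreal (dTV D1 D2 + real l * dTV D1s D2s)"
    by (simp add: \<mu>.emeasure_eq_measure)
  moreover have nn: "0 \<le> dTV D1 D2 + real l * dTV D1s D2s" using dn0 by simp
  ultimately have mb: "measure \<mu> ?bad \<le> dTV D1 D2 + real l * dTV D1s D2s"
    by (simp only: ennreal_le_iff[OF nn])
  have sp\<mu>: "space \<mu> = UNIV" using sets_eq_imp_space_eq[OF sets\<mu>] by simp
  have "{(X, Y). expl_agree X Y} = space \<mu> - ?bad" using sp\<mu> by auto
  then have "measure \<mu> {(X, Y). expl_agree X Y} = 1 - measure \<mu> ?bad"
    using \<mu>.prob_compl[of ?bad] sets\<mu> by simp
  then have "measure \<mu> {(X, Y). expl_agree X Y} \<ge> 1 - dTV D1 D2 - real l * dTV D1s D2s"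
    using mb by simp
  then show ?thesis using prob\<mu> sets\<mu> d1 d2 by blast
qed


end
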